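(* Consider a solution $(\Sigma_+(\tau),\mathcal{R}_1(\tau),\mathcal{R}_2(\tau),M(\tau),\psi(\tau),v(\tau))$, defined for all $\tau\ge\tau_0$, of the system \begin{align*} \Sigma_+' &= -(1-\Sigma_+^2)\Sigma_+ - \mathcal{R}_1 + (1+\Sigma_+)\mathcal{R}_2\cos 2\psi - \frac{4\Omega v^2}{3+v^2},\\ \mathcal{R}_1' &= 2\big[(1+\Sigma_+)\Sigma_+ + \mathcal{R}_2\cos 2\psi\big]\mathcal{R}_1 - 2(1+\Sigma_+)(\cos 2\psi)\mathcal{R}_2,\\ \mathcal{R}_2' &= 2\big[(1+\Sigma_+)\Sigma_+ + \mathcal{R}_2\cos 2\psi\big]\mathcal{R}_2 - 2(1+\Sigma_+)(\cos 2\psi)\mathcal{R}_1,\\ M' &= -\big[(1+\Sigma_+)^2 + \mathcal{R}_2\cos 2\psi + 3\mathcal{R}_2 M\sin 2\psi\big]M,\\ \psi' &= \frac{2}{M} + (1+\Sigma_+)\frac{\mathcal{R}_1}{\mathcal{R}_2}\sin 2\psi,\\ v' &= \frac{6}{3-v^2}\Sigma_+(1-v^2)v, \end{align*} subject to the constraint \[ \mathcal{R}_1^2-\mathcal{R}_2^2-\left(\frac{4\Omega v}{3+v^2}\right)^2=0, \] where $\Omega := 1-\Sigma_+^2-\mathcal{R}_1$ and $'$ denotes $d/d\tau$. Suppose the solution satisfies $\Omega>0$, $\mathcal{R}_1>0$ and $\mathcal{R}_2>0$ for all $\tau\ge\tau_0$. Then \[ \lim_{\tau\to+\infty}(\Sigma_+,\mathcal{R}_1,\mathcal{R}_2,v,M)=(0,0,0,0,0),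 \] and moreover \[ \lim_{\tau\to+\infty}\frac{\mathcal{R}_1}{M^2}=+\infty,\qquad \lim_{\tau\to+\infty}\frac{\mathcal{R}_2}{M^2}=+\infty. \]
   Context: This system describes spatially homogeneous Bianchi type VII$_0$ cosmologies with a tilted irrotational radiation perfect fluid (equation of state $\tilde p=\tfrac13\tilde\rho$), zero cosmological constant, in Hubble-normalized variables with dimensionless time $\tau$ ($dt/d\tau=1/H$, $H$ the Hubble scalar). Here $\Sigma_+$ is a Hubble-normalized shear component, $v\in(-1,1)$ is the tilt, $\Omega$ is the density parameter, and $\mathcal{R}_1,\mathcal{R}_2,\psi$ are defined from the Hubble-normalized shear components $\Sigma_-,\Sigma_\times$ and curvature components $N_-,N_\times$ by $\mathcal{R}_1=\Sigma_-^2+\Sigma_\times^2+N_-^2+N_\times^2$, $\mathcal{R}_2\cos2\psi=\Sigma_-^2+\Sigma_\times^2-N_-^2-N_\times^2$, $\mathcal{R}_2\sin2\psi=2(\Sigma_-N_-+\Sigma_\times N_\times)$. The variable $M=1/N_+$, where $N_+$ is the remaining Hubble-normalized spatial curvature variable; for these cosmologies (with $\Omega>0$) it is a known standing fact, used by the paper, that $N_+\to+\infty$, i.e. $M\to0^+$, as $\tau\to+\infty$. *)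

theory Defs
  imports "HOL-Analysis.Analysis"
begin

definition Omg :: "real \<Rightarrow> real \<Rightarrow> real" where
  "Omg s r1 = 1 - s^2 - r1"

end

theory Submission
  imports Defs
begin

lemma no_down_cross:
  fixes f f' :: "real \<Rightarrow> real"
  assumes der: "\<And>x. x \<ge> ts \<Longrightarrow> (f has_real_derivative f' x) (at x)"
    and lev: "\<And>x. x \<ge> ts \<Longrightarrow> f x = a \<Longrightarrow> f' x > 0"
    and start: "f ts \<ge> a" and t: "t \<ge> ts"
  shows "f t \<ge> a"
proof (rule ccontr)
  assume nt: "\<not> f t \<ge> a"
  have cont: "continuous_on {ts..t} f"
    using der by (intro continuous_at_imp_continuous_on ballI DERIV_isCont) auto
  define K where "K = {ts..t} \<inter> f -` {a..}"
  have Kcl: "closed K" unfolding K_def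
    by (rule continuous_closed_preimage[OF cont]) auto
  have Kne: "K \<noteq> {}" using start t unfolding K_def by auto
  have Kbd: "bdd_above K" unfolding K_def by (rule bdd_aboveI[of _ t]) auto
  define s where "s = Sup K"
  have sK: "s \<in> K" using closed_contains_Sup[OF Kne Kbd Kcl] s_def by simp
  hence s1: "ts \<le> s" "s \<le> t" "f s \<ge> a" unfolding K_def by auto
  have st: "s < t" using s1 nt by (metis order.order_iff_strict)
  have after: "\<And>x. s < x \<Longrightarrow> x \<le> t \<Longrightarrow> f x < a"
  proof -
    fix x assume "s < x" "x \<le> t"
    show "f x < a"
    proof (rule ccontr)
      assume "\<not> f x < a"
      hence "x \<in> K" using \<open>s < x\<close> \<open>x \<le> t\<close> s1 unfolding K_def by auto
      hence "x \<le> s" unfolding s_def using Kbd by (simp add: cSup_upper)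
      thus False using \<open>s < x\<close> by simp
    qed
  qed
  show False
  proof (cases "f s = a")
    case True
    have "f' s > 0" using lev[OF s1(1) True] .
    then obtain d where d: "d > 0" "\<And>h. h > 0 \<Longrightarrow> h < d \<Longrightarrow> f s < f (s + h)"
      using DERIV_pos_inc_right[OF der[OF s1(1)]] by blast
    define h where "h = min (d/2) (t - s)"
    have h: "h > 0" "h < d" "s + h \<le> t" using d st unfolding h_def by auto
    have "f (s + h) < a" using after[of "s+h"] h by simp
    moreover have "f s < f (s + h)" using d(2) h by simp
    ultimately show False using True by simp
  next
    case False
    hence fs: "f s > a" using s1 by simp
    have "isCont f s" using der[OF s1(1)] by (rule DERIV_isCont)
    then have "f \<midarrow>s\<rightarrow> f s" unfolding isCont_def .
    from LIM_D[OF this, of "f s - a"] fs obtain d where d0: "d > 0"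
      and dd: "\<And>y. y \<noteq> s \<and> norm (y - s) < d \<longrightarrow> norm (f y - f s) < f s - a" by auto
    have d: "d > 0" "\<And>y. \<bar>y - s\<bar> < d \<Longrightarrow> y \<noteq> s \<Longrightarrow> \<bar>f y - f s\<bar> < f s - a"
      using d0 dd by auto
    define h where "h = min (d/2) (t - s)"
    have h: "h > 0" "h < d" "s + h \<le> t" using d st unfolding h_def by auto
    have "f (s + h) < a" using after[of "s+h"] h by simp
    moreover have "\<bar>f (s+h) - f s\<bar> < f s - a" using d(2)[of "s+h"] h by auto
    ultimately show False by simp
  qed
qed

lemma deriv_lower_lin:
  fixes f Df :: "real \<Rightarrow> real"
  assumes "\<And>y. x \<le> y \<Longrightarrow> y \<le> z \<Longrightarrow> (f has_real_derivative Df y) (at y)"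
    and "\<And>y. x \<le> y \<Longrightarrow> y \<le> z \<Longrightarrow> Df y \<ge> k" and "x \<le> z"
  shows "f z \<ge> f x + k * (z - x)"
proof -
  have "(\<lambda>y. f y - k * y) x \<le> (\<lambda>y. f y - k * y) z"
  proof (rule DERIV_nonneg_imp_nondecreasing[OF assms(3)])
    fix y assume "x \<le> y" "y \<le> z"
    show "\<exists>d. ((\<lambda>y. f y - k * y) has_real_derivative d) (at y) \<and> d \<ge> 0"
      using assms(1,2)[OF \<open>x \<le> y\<close> \<open>y \<le> z\<close>]
      by (intro exI[of _ "Df y - k"]) (auto intro!: derivative_eq_intros)
  qed
  thus ?thesis by (simp add: algebra_simps)
qed

lemma deriv_upper_lin:
  fixes f Df :: "real \<Rightarrow> real"
  assumes "\<And>y. x \<le> y \<Longrightarrow> y \<le> z \<Longrightarrow> (f has_real_derivative Df y) (at y)"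
    and "\<And>y. x \<le> y \<Longrightarrow> y \<le> z \<Longrightarrow> Df y \<le> k" and "x \<le> z"
  shows "f z \<le> f x + k * (z - x)"
proof -
  have "(\<lambda>y. - f y) z \<ge> (\<lambda>y. - f y) x + (-k) * (z - x)"
    by (rule deriv_lower_lin[of x z _ "\<lambda>y. - Df y"]) (use assms in \<open>auto intro!: derivative_eq_intros\<close>)
  thus ?thesis by simp
qed

lemma drain_to_zero:
  fixes F DF f Df g :: "real \<Rightarrow> real"
  assumes dF: "\<And>x. x \<ge> T \<Longrightarrow> (F has_real_derivative DF x) (at x)"
    and DFle: "\<And>x. x \<ge> T \<Longrightarrow> DF x \<le> - f x + g x"
    and df: "\<And>x. x \<ge> T \<Longrightarrow> (f has_real_derivative Df x) (at x)"
    and Dfb: "\<And>x. x \<ge> T \<Longrightarrow> \<bar>Df x\<bar> \<le> B"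
    and F0: "(F \<longlongrightarrow> 0) at_top" and g0: "(g \<longlongrightarrow> 0) at_top"
    and fnn: "\<And>x. x \<ge> T \<Longrightarrow> f x \<ge> 0"
  shows "(f \<longlongrightarrow> 0) at_top"
proof (rule tendstoI)
  fix e :: real assume e: "e > 0"
  define B' where "B' = max B 1"
  have B': "B' > 0" "B \<le> B'" unfolding B'_def by auto
  define h where "h = e / (2 * B')"
  have h: "h > 0" unfolding h_def using e B' by simp
  have "eventually (\<lambda>x. dist (F x) 0 < e * h / 8) at_top"
    using F0 by (rule tendstoD) (use e h in simp)
  hence ev1: "eventually (\<lambda>x. \<bar>F x\<bar> < e * h / 8) at_top" by (simp add: dist_real_def)
  have "eventually (\<lambda>x. dist (g x) 0 < e / 4) at_top"
    using g0 by (rule tendstoD) (use e in simp)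
  hence ev2: "eventually (\<lambda>x. \<bar>g x\<bar> < e / 4) at_top" by (simp add: dist_real_def)
  have ev3: "eventually (\<lambda>x. x \<ge> T) at_top" by (rule eventually_ge_at_top)
  from eventually_conj[OF ev1 eventually_conj[OF ev2 ev3]] obtain N where
    N: "\<And>x. x \<ge> N \<Longrightarrow> \<bar>F x\<bar> < e * h / 8 \<and> \<bar>g x\<bar> < e / 4 \<and> x \<ge> T"
    unfolding eventually_at_top_linorder by blast
  have "\<forall>x\<ge>N. \<bar>f x\<bar> < e"
  proof (intro allI impI)
    fix x assume xN: "x \<ge> N"
    show "\<bar>f x\<bar> < e"
    proof (rule ccontr)
      assume "\<not> \<bar>f x\<bar> < e"
      hence fx: "f x \<ge> e" using fnn[of x] N[OF xN] by auto
      have flow: "f y \<ge> e / 2" if "x \<le> y" "y \<le> x + h" for y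
      proof -
        have "f y \<ge> f x + (-B') * (y - x)"
        proof (rule deriv_lower_lin[of x y f Df])
          fix w assume w: "x \<le> w" "w \<le> y"
          have wT: "w \<ge> T" using w N xN by force
          show "(f has_real_derivative Df w) (at w)" using df[OF wT] .
          show "- B' \<le> Df w" using Dfb[OF wT] B' by auto
        qed (use that in auto)
        moreover have "B' * (y - x) \<le> B' * h" using that B' by (intro mult_left_mono) auto
        moreover have "B' * h = e / 2" unfolding h_def using B' by simp
        ultimately show ?thesis using fx by linarith
      qed
      have "F (x + h) \<le> F x + (- (e/4)) * ((x + h) - x)"
      proof (rule deriv_upper_lin[of x "x+h" F DF])
        fix y assume y: "x \<le> y" "y \<le> x + h"
        have yN: "y \<ge> N" using y xN by simp
        show "(F has_real_derivative DF y) (at y)" using dF N[OF yN] by auto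
        show "DF y \<le> - (e/4)" using DFle[of y] N[OF yN] flow[OF y] by auto
      qed (use h in auto)
      moreover have "\<bar>F x\<bar> < e * h / 8" "\<bar>F (x+h)\<bar> < e * h / 8" using N xN h by auto
      moreover have "(- (e/4)) * ((x + h) - x) = - (e*h/4)" by simp
      ultimately show False by linarith
    qed
  qed
  thus "eventually (\<lambda>x. dist (f x) 0 < e) at_top"
    unfolding eventually_at_top_linorder dist_real_def by auto
qed

lemma mono_bdd_conv:
  fixes V DV :: "real \<Rightarrow> real"
  assumes dV: "\<And>x. x \<ge> T \<Longrightarrow> (V has_real_derivative DV x) (at x)"
    and DVnn: "\<And>x. x \<ge> T \<Longrightarrow> DV x \<ge> 0"
    and bd: "\<And>x. x \<ge> T \<Longrightarrow> V x \<le> U"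
  shows "\<exists>L. (V \<longlongrightarrow> L) at_top"
proof -
  define L where "L = Sup (V ` {T..})"
  have bdd: "bdd_above (V ` {T..})" using bd by (intro bdd_aboveI[of _ U]) auto
  have mono: "V x \<le> V y" if "T \<le> x" "x \<le> y" for x y
    using deriv_lower_lin[of x y V DV 0] that dV DVnn by force
  have le: "V x \<le> L" if "x \<ge> T" for x unfolding L_def using bdd that by (intro cSup_upper) auto
  have "(V \<longlongrightarrow> L) at_top"
  proof (rule tendstoI)
    fix e :: real assume e: "e > 0"
    have "\<exists>y\<in>V ` {T..}. L - e < y" unfolding L_def
      by (rule less_cSupD) (use bdd e in auto)
    then obtain x0 where x0: "x0 \<ge> T" "V x0 > L - e" by auto
    have "\<forall>x\<ge>x0. dist (V x) L < e"
    proof (intro allI impI)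
      fix x assume "x \<ge> x0"
      hence "V x \<ge> V x0" "V x \<le> L" using mono[of x0 x] le[of x] x0 by auto
      thus "dist (V x) L < e" using x0 e unfolding dist_real_def by auto
    qed
    thus "eventually (\<lambda>x. dist (V x) L < e) at_top" unfolding eventually_at_top_linorder by blast
  qed
  thus ?thesis by blast
qed

lemma grow_to_infty:
  fixes F DF :: "real \<Rightarrow> real"
  assumes dF: "\<And>x. x \<ge> T \<Longrightarrow> (F has_real_derivative DF x) (at x)"
    and DFge: "\<And>x. x \<ge> T \<Longrightarrow> DF x \<ge> k" and k: "k > 0"
  shows "filterlim F at_top at_top"
unfolding filterlim_at_top proof (intro allI)
  fix Z :: real
  define x0 where "x0 = max T (T + (Z - F T) / k)"
  have "\<forall>x\<ge>x0. F x \<ge> Z"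
  proof (intro allI impI)
    fix x assume x: "x \<ge> x0"
    have "F x \<ge> F T + k * (x - T)"
      by (rule deriv_lower_lin[of T x F DF]) (use dF DFge x x0_def in auto)
    moreover have "k * (x - T) \<ge> Z - F T"
    proof -
      have "x - T \<ge> (Z - F T) / k" using x unfolding x0_def by auto
      hence "k * (x - T) \<ge> k * ((Z - F T) / k)" using k by (intro mult_left_mono) auto
      thus ?thesis using k by simp
    qed
    ultimately show "F x \<ge> Z" by linarith
  qed
  thus "eventually (\<lambda>x. Z \<le> F x) at_top" unfolding eventually_at_top_linorder by blast
qed

lemma abs3: fixes a b c :: real shows "\<bar>a + b + c\<bar> \<le> \<bar>a\<bar> + \<bar>b\<bar> + \<bar>c\<bar>"
  by simp

lemma alg_dX:
  fixes S R1 R2 M c s :: real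
  assumes "R2 \<noteq> 0" "M \<noteq> 0" "c * c = 1 - s * s"
  shows "(2 * ((1 + S) * S + R2 * c) * R2 - 2 * (1 + S) * c * R1) * c
     + R2 * (- s * (2 * (2 / M + (1 + S) * (R1 / R2) * s)))
   = 2 * ((1 + S) * S + R2 * c) * (R2 * c) - 2 * (1 + S) * R1 - 4 * (R2 * s) / M"
  using assms by (simp add: field_simps, algebra)

lemma alg_dY:
  fixes S R1 R2 M c s :: real
  assumes "R2 \<noteq> 0" "M \<noteq> 0"
  shows "(2 * ((1 + S) * S + R2 * c) * R2 - 2 * (1 + S) * c * R1) * s
     + R2 * (c * (2 * (2 / M + (1 + S) * (R1 / R2) * s)))
   = 2 * ((1 + S) * S + R2 * c) * (R2 * s) + 4 * (R2 * c) / M"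
  using assms by (simp add: field_simps)

lemma alg_q:
  fixes S R1 X Y M :: real
  assumes "R1 \<noteq> 0" "M \<noteq> 0"
  shows "((2*((1+S)*S + X)*Y + 4*X/M) * R1 - Y * (2*((1+S)*S + X)*R1 - 2*(1+S)*X)) / (R1*R1)
     = 4*(X/R1)/M + 2*(1+S)*(X/R1)*(Y/R1)"
  using assms by (simp add: field_simps)
lemma alg_p:
  fixes S R1 X Y M :: real
  assumes "R1 \<noteq> 0" "M \<noteq> 0"
  shows "((2*((1+S)*S + X)*X - 2*(1+S)*R1 - 4*Y/M)*R1 - X*(2*((1+S)*S+X)*R1 - 2*(1+S)*X))/(R1*R1)
    = -2*(1+S) + 2*(1+S)*(X/R1)^2 - 4*(Y/R1)/M"
  using assms by (simp add: field_simps power2_eq_square)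
lemma alg_MY:
  fixes S X Y M :: real
  assumes "M \<noteq> 0"
  shows "(-((1+S)^2 + X + 3*M*Y)*M)*Y + M*(2*((1+S)*S + X)*Y + 4*X/M) = 4*X - M*Y*(1 - S^2 - X + 3*M*Y)"
  using assms by (simp add: field_simps power2_eq_square)
lemma alg_Mq:
  fixes S X Y M p q :: real
  assumes "M \<noteq> 0"
  shows "(-((1+S)^2 + X + 3*M*Y)*M)*q + M*(4*p/M + 2*(1+S)*p*q) = 4*p - M*q*((1+S)^2 + X + 3*M*Y - 2*(1+S)*p)"
  using assms by (simp add: field_simps power2_eq_square)
lemma alg_DOm:
  fixes S R1 X v :: real
  assumes "0 < 3 + v^2"
  shows "- (2 * S * (- (1 - S^2) * S - R1 + (1 + S) * X - 4 * (1 - S^2 - R1) * v^2 / (3 + v^2)))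
         - (2 * ((1 + S) * S + X) * R1 - 2 * (1 + S) * X)
       = 2 * (1 - S^2 - R1) * (S^2 + X + 4 * S * v^2 / (3 + v^2))"
  using assms by (simp add: field_simps, algebra)
lemma alg_Dv_w:
  fixes S w a b c :: real
  assumes "a \<noteq> 0" "b \<noteq> 0" "c \<noteq> 0" "a = 3 - w" "b = 3 + w" "c = 1 - w"
  shows "- (12 * S * w * c / a) / c / 3 - (12 * S * w * c / a) / b = - 8 * S * w / b"
proof -
  have "- (12 * S * w * c / a) / c / 3 - (12 * S * w * c / a) / b = (- 4 * S * w * b - 12 * S * w * c) / (a * b)"
    using assms(1-3) by (simp add: field_simps)
  also have "- 4 * S * w * b - 12 * S * w * c = - 8 * S * w * a" using assms(4-6) by algebra
  also have "- 8 * S * w * a / (a * b) = - 8 * S * w / b" using assms(1,2) by simp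
  finally show ?thesis .
qed
lemma alg_Dv:
  fixes S v :: real
  assumes "3 + v^2 \<noteq> 0" "3 - v^2 \<noteq> 0" "1 - v^2 \<noteq> 0"
  shows "- (2 * v * (6 / (3 - v^2) * S * (1 - v^2) * v)) / (1 - v^2) / 3
     - 2 * v * (6 / (3 - v^2) * S * (1 - v^2) * v) / (3 + v^2) = - 8 * S * v^2 / (3 + v^2)"
proof -
  have e: "2 * v * (6 / (3 - v^2) * S * (1 - v^2) * v) = 12 * S * v^2 * (1 - v^2) / (3 - v^2)"
    by (simp add: power2_eq_square)
  show ?thesis unfolding e using alg_Dv_w[OF assms(2,1,3) refl refl refl] by simp
qed

locale sys =
  fixes Sp R1 R2 M psi v :: "real \<Rightarrow> real" and \<tau>0 :: real
  assumes dSp: "\<And>t. t \<ge> \<tau>0 \<Longrightarrow> (Sp has_real_derivative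
      (-(1 - (Sp t)^2) * Sp t - R1 t + (1 + Sp t) * R2 t * cos (2 * psi t)
       - 4 * Omg (Sp t) (R1 t) * (v t)^2 / (3 + (v t)^2))) (at t within {\<tau>0..})"
    and dR1: "\<And>t. t \<ge> \<tau>0 \<Longrightarrow> (R1 has_real_derivative
      (2 * ((1 + Sp t) * Sp t + R2 t * cos (2 * psi t)) * R1 t
       - 2 * (1 + Sp t) * cos (2 * psi t) * R2 t)) (at t within {\<tau>0..})"
    and dR2: "\<And>t. t \<ge> \<tau>0 \<Longrightarrow> (R2 has_real_derivative
      (2 * ((1 + Sp t) * Sp t + R2 t * cos (2 * psi t)) * R2 t
       - 2 * (1 + Sp t) * cos (2 * psi t) * R1 t)) (at t within {\<tau>0..})"
    and dM: "\<And>t. t \<ge> \<tau>0 \<Longrightarrow> (M has_real_derivative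
      (-((1 + Sp t)^2 + R2 t * cos (2 * psi t) + 3 * R2 t * M t * sin (2 * psi t)) * M t))
      (at t within {\<tau>0..})"
    and dpsi: "\<And>t. t \<ge> \<tau>0 \<Longrightarrow> (psi has_real_derivative
      (2 / M t + (1 + Sp t) * (R1 t / R2 t) * sin (2 * psi t))) (at t within {\<tau>0..})"
    and dv: "\<And>t. t \<ge> \<tau>0 \<Longrightarrow> (v has_real_derivative
      (6 / (3 - (v t)^2) * Sp t * (1 - (v t)^2) * v t)) (at t within {\<tau>0..})"
    and constr: "\<And>t. t \<ge> \<tau>0 \<Longrightarrow>
      (R1 t)^2 - (R2 t)^2 - (4 * Omg (Sp t) (R1 t) * v t / (3 + (v t)^2))^2 = 0"
    and vbd: "\<And>t. t \<ge> \<tau>0 \<Longrightarrow> -1 < v t \<and> v t < 1"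
    and Opos: "\<And>t. t \<ge> \<tau>0 \<Longrightarrow> Omg (Sp t) (R1 t) > 0"
    and R1pos: "\<And>t. t \<ge> \<tau>0 \<Longrightarrow> R1 t > 0"
    and R2pos: "\<And>t. t \<ge> \<tau>0 \<Longrightarrow> R2 t > 0"
    and Mnz: "\<And>t. t \<ge> \<tau>0 \<Longrightarrow> M t \<noteq> 0"
    and Mlim: "filterlim M (at_right 0) at_top"
begin

definition "X t = R2 t * cos (2 * psi t)"
definition "Y t = R2 t * sin (2 * psi t)"
definition "Om t = 1 - (Sp t)^2 - R1 t"
definition "DS t = -(1 - (Sp t)^2) * Sp t - R1 t + (1 + Sp t) * R2 t * cos (2 * psi t)
       - 4 * Omg (Sp t) (R1 t) * (v t)^2 / (3 + (v t)^2)"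
definition "DR1 t = 2 * ((1 + Sp t) * Sp t + R2 t * cos (2 * psi t)) * R1 t
       - 2 * (1 + Sp t) * cos (2 * psi t) * R2 t"
definition "DR2 t = 2 * ((1 + Sp t) * Sp t + R2 t * cos (2 * psi t)) * R2 t
       - 2 * (1 + Sp t) * cos (2 * psi t) * R1 t"
definition "DM t = -((1 + Sp t)^2 + R2 t * cos (2 * psi t) + 3 * R2 t * M t * sin (2 * psi t)) * M t"
definition "Dpsi t = 2 / M t + (1 + Sp t) * (R1 t / R2 t) * sin (2 * psi t)"
definition "Dv t = 6 / (3 - (v t)^2) * Sp t * (1 - (v t)^2) * v t"

lemma atw: "t > \<tau>0 \<Longrightarrow> at t within {\<tau>0..} = at t"
  by (rule at_within_interior) simp

lemma dS': "t > \<tau>0 \<Longrightarrow> (Sp has_real_derivative DS t) (at t)"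
  using dSp[of t] atw[of t] unfolding DS_def by simp
lemma dR1': "t > \<tau>0 \<Longrightarrow> (R1 has_real_derivative DR1 t) (at t)"
  using dR1[of t] atw[of t] unfolding DR1_def by simp
lemma dR2': "t > \<tau>0 \<Longrightarrow> (R2 has_real_derivative DR2 t) (at t)"
  using dR2[of t] atw[of t] unfolding DR2_def by simp
lemma dM': "t > \<tau>0 \<Longrightarrow> (M has_real_derivative DM t) (at t)"
  using dM[of t] atw[of t] unfolding DM_def by simp
lemma dpsi': "t > \<tau>0 \<Longrightarrow> (psi has_real_derivative Dpsi t) (at t)"
  using dpsi[of t] atw[of t] unfolding Dpsi_def by simp
lemma dv': "t > \<tau>0 \<Longrightarrow> (v has_real_derivative Dv t) (at t)"
  using dv[of t] atw[of t] unfolding Dv_def by simp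

lemma Om_pos: "t \<ge> \<tau>0 \<Longrightarrow> Om t > 0"
  using Opos[of t] unfolding Om_def Omg_def by simp

lemma S_bd: assumes "t \<ge> \<tau>0" shows "(Sp t)^2 + R1 t < 1" "-1 < Sp t" "Sp t < 1" "(Sp t)^2 < 1"
proof -
  show 1: "(Sp t)^2 + R1 t < 1" using Om_pos[OF assms] unfolding Om_def by simp
  hence 2: "(Sp t)^2 < 1" using R1pos[OF assms] by simp
  thus "-1 < Sp t" "Sp t < 1" by (auto simp: abs_square_less_1 abs_less_iff)
  show "(Sp t)^2 < 1" by fact
qed

lemma R2_le_R1: assumes "t \<ge> \<tau>0" shows "R2 t \<le> R1 t"
proof -
  have "(R2 t)^2 \<le> (R1 t)^2" using constr[OF assms] by (smt (verit) zero_le_power2)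
  thus ?thesis using R1pos[OF assms] R2pos[OF assms] by (simp add: power2_le_iff_abs_le)
qed

lemma XY_bd: assumes "t \<ge> \<tau>0" shows "\<bar>X t\<bar> \<le> R2 t" "\<bar>Y t\<bar> \<le> R2 t" "\<bar>X t\<bar> \<le> R1 t" "\<bar>Y t\<bar> \<le> R1 t"
proof -
  show 1: "\<bar>X t\<bar> \<le> R2 t" unfolding X_def using R2pos[OF assms]
    by (simp add: abs_mult mult_left_le)
  show 2: "\<bar>Y t\<bar> \<le> R2 t" unfolding Y_def using R2pos[OF assms]
    by (simp add: abs_mult mult_left_le)
  show "\<bar>X t\<bar> \<le> R1 t" "\<bar>Y t\<bar> \<le> R1 t" using 1 2 R2_le_R1[OF assms] by auto
qed

lemma XY_sq: "(X t)^2 + (Y t)^2 = (R2 t)^2"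
proof -
  have "(X t)^2 + (Y t)^2 = (R2 t)^2 * ((sin (2 * psi t))^2 + (cos (2 * psi t))^2)"
    unfolding X_def Y_def power_mult_distrib by (simp only: distrib_left add.commute)
  thus ?thesis by simp
qed

lemma R1_lt: assumes "t \<ge> \<tau>0" shows "R1 t < 1 - (Sp t)^2" "R1 t < 1"
proof -
  have "(Sp t)^2 \<ge> 0" by simp
  thus "R1 t < 1 - (Sp t)^2" "R1 t < 1" using S_bd[OF assms] by linarith+
qed

definition "DX t = 2 * ((1 + Sp t) * Sp t + X t) * X t - 2 * (1 + Sp t) * R1 t - 4 * Y t / M t"
definition "DY t = 2 * ((1 + Sp t) * Sp t + X t) * Y t + 4 * X t / M t"

lemma dX: assumes "t > \<tau>0" shows "(X has_real_derivative DX t) (at t)"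
proof -
  have t: "t \<ge> \<tau>0" using assms by simp
  have "((\<lambda>t. R2 t * cos (2 * psi t)) has_real_derivative
     (DR2 t * cos (2 * psi t) + R2 t * (- sin (2 * psi t) * (2 * Dpsi t)))) (at t)"
    by (auto intro!: derivative_eq_intros dR2'[OF assms] dpsi'[OF assms])
  moreover have "DR2 t * cos (2 * psi t) + R2 t * (- sin (2 * psi t) * (2 * Dpsi t)) = DX t"
  proof -
    have sc: "(sin (2 * psi t))^2 + (cos (2 * psi t))^2 = 1" by simp
    have R2: "R2 t \<noteq> 0" using R2pos[OF t] by simp
    have Mn: "M t \<noteq> 0" using Mnz[OF t] .
    have cc: "cos (2 * psi t) * cos (2 * psi t) = 1 - sin (2 * psi t) * sin (2 * psi t)"
      using sc by (simp add: power2_eq_square)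
    show ?thesis
      unfolding DR2_def Dpsi_def X_def Y_def DX_def using alg_dX[OF R2 Mn cc] by simp
  qed
  ultimately show ?thesis unfolding X_def by simp
qed

lemma dY: assumes "t > \<tau>0" shows "(Y has_real_derivative DY t) (at t)"
proof -
  have t: "t \<ge> \<tau>0" using assms by simp
  have "((\<lambda>t. R2 t * sin (2 * psi t)) has_real_derivative
     (DR2 t * sin (2 * psi t) + R2 t * (cos (2 * psi t) * (2 * Dpsi t)))) (at t)"
    by (auto intro!: derivative_eq_intros dR2'[OF assms] dpsi'[OF assms])
  moreover have "DR2 t * sin (2 * psi t) + R2 t * (cos (2 * psi t) * (2 * Dpsi t)) = DY t"
  proof -
    have R2: "R2 t \<noteq> 0" using R2pos[OF t] by simp
    have Mn: "M t \<noteq> 0" using Mnz[OF t] .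
    show ?thesis
      unfolding DR2_def Dpsi_def X_def Y_def DY_def using alg_dY[OF R2 Mn] by simp
  qed
  ultimately show ?thesis unfolding Y_def by simp
qed

lemma v_bd: assumes "t \<ge> \<tau>0" shows "(v t)^2 < 1" "0 < 1 - (v t)^2" "0 < 3 - (v t)^2" "0 < 3 + (v t)^2"
proof -
  have "\<bar>v t\<bar> < 1" using vbd[OF assms] by auto
  thus 1: "(v t)^2 < 1" by (simp add: abs_square_less_1)
  thus "0 < 1 - (v t)^2" "0 < 3 - (v t)^2" by auto
  show "0 < 3 + (v t)^2" by (simp add: add_pos_nonneg)
qed

lemma DS_alt: assumes "t \<ge> \<tau>0"
  shows "DS t = - ((1 + Sp t)^2 * (1 - Sp t)) + 3 * Om t * (1 - (v t)^2) / (3 + (v t)^2) + (1 + Sp t) * X t"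
proof -
  have p: "0 < 3 + (v t)^2" using v_bd[OF assms] by simp
  have "4 * (1 - (Sp t)^2 - R1 t) * (v t)^2 / (3 + (v t)^2) = (1 - (Sp t)^2 - R1 t) - 3 * (1 - (Sp t)^2 - R1 t) * (1 - (v t)^2) / (3 + (v t)^2)"
    using p by (simp add: field_simps)
  thus ?thesis unfolding DS_def Om_def Omg_def X_def
    by (simp add: power2_eq_square algebra_simps)
qed

lemma DS_bd: assumes t: "t \<ge> \<tau>0" shows "\<bar>DS t\<bar> \<le> 5 * (1 - (Sp t)^2)"
proof -
  have S: "-1 < Sp t" "Sp t < 1" using S_bd[OF t] by auto
  have w: "1 - (Sp t)^2 > 0" using S_bd[OF t] by simp
  have a: "\<bar>(1 + Sp t)^2 * (1 - Sp t)\<bar> \<le> 2 * (1 - (Sp t)^2)"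
  proof -
    have "(1 + Sp t)^2 * (1 - Sp t) = (1 + Sp t) * (1 - (Sp t)^2)" by (simp add: power2_eq_square algebra_simps)
    moreover have "(1 + Sp t) * (1 - (Sp t)^2) \<le> 2 * (1 - (Sp t)^2)" using S w by (intro mult_right_mono) auto
    moreover have "(1 + Sp t) * (1 - (Sp t)^2) \<ge> 0" using S w by simp
    ultimately show ?thesis by simp
  qed
  have vv: "0 < 1 - (v t)^2" "0 < 3 + (v t)^2" using v_bd[OF t] by auto
  have Omp: "Om t > 0" using Om_pos[OF t] .
  have b: "\<bar>3 * Om t * (1 - (v t)^2) / (3 + (v t)^2)\<bar> \<le> 1 - (Sp t)^2"
  proof -
    have "3 * Om t * (1 - (v t)^2) / (3 + (v t)^2) \<le> Om t"
      using vv Omp by (simp add: divide_le_eq)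
    moreover have "3 * Om t * (1 - (v t)^2) / (3 + (v t)^2) \<ge> 0" using vv Omp by simp
    moreover have "Om t \<le> 1 - (Sp t)^2" unfolding Om_def using R1pos[OF t] by simp
    ultimately show ?thesis by simp
  qed
  have c: "\<bar>(1 + Sp t) * X t\<bar> \<le> 2 * (1 - (Sp t)^2)"
  proof -
    have "\<bar>(1 + Sp t) * X t\<bar> = (1 + Sp t) * \<bar>X t\<bar>" using S by (simp add: abs_mult)
    also have "\<dots> \<le> 2 * R1 t" using S XY_bd[OF t] R1pos[OF t] by (intro mult_mono) auto
    also have "\<dots> \<le> 2 * (1 - (Sp t)^2)" using R1_lt[OF t] by simp
    finally show ?thesis .
  qed
  show ?thesis unfolding DS_alt[OF t]
    using a b c abs3[of "- ((1 + Sp t)^2 * (1 - Sp t))" "3 * Om t * (1 - (v t)^2) / (3 + (v t)^2)" "(1 + Sp t) * X t"]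
    by simp
qed

lemma DR1_eq: "DR1 t = 2 * ((1 + Sp t) * Sp t + X t) * R1 t - 2 * (1 + Sp t) * X t"
  unfolding DR1_def X_def by simp

lemma DM_eq: "DM t = -((1 + Sp t)^2 + X t + 3 * M t * Y t) * M t"
  unfolding DM_def X_def Y_def by (simp add: algebra_simps)

lemma S_upper: "\<exists>m. 0 < m \<and> m < 1 \<and> (\<forall>t\<ge>\<tau>0 + 1. Sp t \<le> m)"
proof -
  define m where "m = (1 + max (Sp (\<tau>0 + 1)) 0) / 2"
  have Sl: "Sp (\<tau>0 + 1) < 1" using S_bd[of "\<tau>0 + 1"] by simp
  have m: "0 < m" "m < 1" "Sp (\<tau>0 + 1) \<le> m" unfolding m_def using Sl by auto
  have "\<forall>t\<ge>\<tau>0 + 1. (\<lambda>t. - Sp t) t \<ge> - m"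
  proof (intro allI impI)
    fix t assume t: "t \<ge> \<tau>0 + 1"
    show "(\<lambda>t. - Sp t) t \<ge> - m"
    proof (rule no_down_cross[where f = "\<lambda>t. - Sp t" and f' = "\<lambda>t. - DS t" and ts = "\<tau>0 + 1" and a = "- m"])
      fix x assume x: "x \<ge> \<tau>0 + 1"
      show "((\<lambda>t. - Sp t) has_real_derivative - DS x) (at x)"
        using dS'[of x] x by (auto intro!: derivative_eq_intros)
    next
      fix x assume x: "x \<ge> \<tau>0 + 1"
      assume lev: "- Sp x = - m"
      have x0: "x \<ge> \<tau>0" using x by simp
      have Sx: "Sp x = m" using lev by simp
      have vv: "0 < 1 - (v x)^2" "0 < 3 + (v x)^2" using v_bd[OF x0] by auto
      have Omp: "Om x > 0" using Om_pos[OF x0] .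
      have b: "3 * Om x * (1 - (v x)^2) / (3 + (v x)^2) \<le> Om x"
        using vv Omp by (simp add: divide_le_eq)
      have b2: "Om x < (1 + m) * Om x" using Omp m by simp
      have c: "(1 + m) * X x \<le> (1 + m) * R1 x" using XY_bd[OF x0] m by (intro mult_left_mono) auto
      have e: "- ((1 + m)^2 * (1 - m)) + (1 + m) * (Om x + R1 x) = 0"
        unfolding Om_def Sx by (simp add: power2_eq_square algebra_simps)
      have "DS x < 0" unfolding DS_alt[OF x0] Sx using b b2 c e by (simp add: algebra_simps)
      thus "- DS x > 0" by simp
    qed (use m t in auto)
  qed
  thus ?thesis using m by force
qed

definition "p t = X t / R1 t"
definition "q t = Y t / R1 t"
definition "E1 t = 1 - (Sp t)^2 - X t + 3 * M t * Y t"
definition "E2 t = (1 + Sp t)^2 + X t + 3 * M t * Y t - 2 * (1 + Sp t) * p t"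
definition "MY t = M t * Y t"
definition "Mq t = M t * q t"
definition "BMQ t = 2 * (1 + Sp t) * Mq t"
definition "LPhi t = ln (Om t) + ln (1 - (v t)^2) / 3 - ln (3 + (v t)^2)"
definition "Lmr t = ln (M t) + ln (R1 t) - MY t / 4 + BMQ t / 4"
definition "errs t = - 3 * MY t + MY t * E1 t / 4 + DS t * Mq t / 2 - (1 + Sp t) * Mq t * E2 t / 2"

lemma dq: assumes "t > \<tau>0" shows "(q has_real_derivative (4 * p t / M t + 2 * (1 + Sp t) * p t * q t)) (at t)"
proof -
  have t: "t \<ge> \<tau>0" using assms by simp
  have R: "R1 t \<noteq> 0" using R1pos[OF t] by simp
  have Mn: "M t \<noteq> 0" using Mnz[OF t] .
  have "((\<lambda>t. Y t / R1 t) has_real_derivative (DY t * R1 t - Y t * DR1 t) / (R1 t * R1 t)) (at t)"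
    by (rule DERIV_divide[OF dY[OF assms] dR1'[OF assms] R])
  moreover have "(DY t * R1 t - Y t * DR1 t) / (R1 t * R1 t) = 4 * p t / M t + 2 * (1 + Sp t) * p t * q t"
    unfolding DY_def DR1_eq p_def q_def using alg_q[OF R Mn] by simp
  moreover have "q = (\<lambda>t. Y t / R1 t)" by (rule ext) (simp add: q_def)
  ultimately show ?thesis by simp
qed

lemma dp: assumes "t > \<tau>0" shows "(p has_real_derivative (-2*(1+Sp t) + 2*(1+Sp t)*(p t)^2 - 4 * q t / M t)) (at t)"
proof -
  have t: "t \<ge> \<tau>0" using assms by simp
  have R: "R1 t \<noteq> 0" using R1pos[OF t] by simp
  have Mn: "M t \<noteq> 0" using Mnz[OF t] .
  have "((\<lambda>t. X t / R1 t) has_real_derivative (DX t * R1 t - X t * DR1 t) / (R1 t * R1 t)) (at t)"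
    by (rule DERIV_divide[OF dX[OF assms] dR1'[OF assms] R])
  moreover have "(DX t * R1 t - X t * DR1 t) / (R1 t * R1 t) = -2*(1+Sp t) + 2*(1+Sp t)*(p t)^2 - 4 * q t / M t"
    unfolding DX_def DR1_eq p_def q_def using alg_p[OF R Mn] by simp
  moreover have "p = (\<lambda>t. X t / R1 t)" by (rule ext) (simp add: p_def)
  ultimately show ?thesis by simp
qed

lemma dMY: assumes "t > \<tau>0" shows "(MY has_real_derivative (4 * X t - MY t * E1 t)) (at t)"
proof -
  have t: "t \<ge> \<tau>0" using assms by simp
  have Mn: "M t \<noteq> 0" using Mnz[OF t] .
  have "((\<lambda>t. M t * Y t) has_real_derivative DM t * Y t + DY t * M t) (at t)"
    by (rule DERIV_mult[OF dM'[OF assms] dY[OF assms]])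
  moreover have "DM t * Y t + DY t * M t = 4 * X t - MY t * E1 t"
    unfolding DM_eq DY_def MY_def E1_def using alg_MY[OF Mn, of "Sp t" "X t" "Y t"] by (simp add: algebra_simps)
  moreover have "MY = (\<lambda>t. M t * Y t)" by (rule ext) (simp add: MY_def)
  ultimately show ?thesis by simp
qed

lemma dMq: assumes "t > \<tau>0" shows "(Mq has_real_derivative (4 * p t - Mq t * E2 t)) (at t)"
proof -
  have t: "t \<ge> \<tau>0" using assms by simp
  have Mn: "M t \<noteq> 0" using Mnz[OF t] .
  have "((\<lambda>t. M t * q t) has_real_derivative DM t * q t + (4 * p t / M t + 2 * (1 + Sp t) * p t * q t) * M t) (at t)"
    by (rule DERIV_mult[OF dM'[OF assms] dq[OF assms]])
  moreover have "DM t * q t + (4 * p t / M t + 2 * (1 + Sp t) * p t * q t) * M t = 4 * p t - Mq t * E2 t"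
    unfolding DM_eq Mq_def E2_def using alg_Mq[OF Mn, of "Sp t" "X t" "Y t" "q t" "p t"] by (simp add: algebra_simps)
  moreover have "Mq = (\<lambda>t. M t * q t)" by (rule ext) (simp add: Mq_def)
  ultimately show ?thesis by simp
qed

lemma dBMQ: assumes "t > \<tau>0"
  shows "(BMQ has_real_derivative (2 * DS t * Mq t + 2 * (1 + Sp t) * (4 * p t - Mq t * E2 t))) (at t)"
proof -
  have "((\<lambda>t. 2 * (1 + Sp t) * Mq t) has_real_derivative (2 * DS t * Mq t + 2 * (1 + Sp t) * (4 * p t - Mq t * E2 t))) (at t)"
    using dS'[OF assms] dMq[OF assms] by (auto intro!: derivative_eq_intros simp: algebra_simps)
  moreover have "BMQ = (\<lambda>t. 2 * (1 + Sp t) * Mq t)" by (rule ext) (simp add: BMQ_def)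
  ultimately show ?thesis by simp
qed

lemma dOm: assumes "t > \<tau>0" shows "(Om has_real_derivative (- (2 * Sp t * DS t) - DR1 t)) (at t)"
proof -
  have "((\<lambda>t. 1 - (Sp t)^2 - R1 t) has_real_derivative (- (2 * Sp t * DS t) - DR1 t)) (at t)"
    using dS'[OF assms] dR1'[OF assms] by (auto intro!: derivative_eq_intros)
  moreover have "Om = (\<lambda>t. 1 - (Sp t)^2 - R1 t)" by (rule ext) (simp add: Om_def)
  ultimately show ?thesis by simp
qed

lemma dLPhi: assumes "t > \<tau>0" shows "(LPhi has_real_derivative (2 * (Sp t)^2 + 2 * X t)) (at t)"
proof -
  have t: "t \<ge> \<tau>0" using assms by simp
  have vb: "0 < 1 - (v t)^2" "0 < 3 - (v t)^2" "0 < 3 + (v t)^2" using v_bd[OF t] by auto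
  have Op: "Om t > 0" using Om_pos[OF t] .
  have d1: "((\<lambda>t. ln (Om t)) has_real_derivative (- (2 * Sp t * DS t) - DR1 t) / Om t) (at t)"
    using dOm[OF assms] Op by (auto intro!: derivative_eq_intros)
  have d2: "((\<lambda>t. ln (1 - (v t)^2)) has_real_derivative (- (2 * v t * Dv t)) / (1 - (v t)^2)) (at t)"
    using dv'[OF assms] vb by (auto intro!: derivative_eq_intros)
  have d3: "((\<lambda>t. ln (3 + (v t)^2)) has_real_derivative (2 * v t * Dv t) / (3 + (v t)^2)) (at t)"
    using dv'[OF assms] vb by (auto intro!: derivative_eq_intros)
  have "((\<lambda>t. ln (Om t) + ln (1 - (v t)^2) / 3 - ln (3 + (v t)^2)) has_real_derivative
      (- (2 * Sp t * DS t) - DR1 t) / Om t + (- (2 * v t * Dv t)) / (1 - (v t)^2) / 3 - 2 * v t * Dv t / (3 + (v t)^2)) (at t)"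
    by (intro derivative_intros DERIV_cdivide d1 d2 d3)
  moreover have "(- (2 * Sp t * DS t) - DR1 t) / Om t + (- (2 * v t * Dv t)) / (1 - (v t)^2) / 3 - 2 * v t * Dv t / (3 + (v t)^2)
     = 2 * (Sp t)^2 + 2 * X t"
  proof -
    have e1: "- (2 * Sp t * DS t) - DR1 t = 2 * Om t * ((Sp t)^2 + X t + 4 * Sp t * (v t)^2 / (3 + (v t)^2))"
      unfolding DS_def DR1_eq Om_def Omg_def X_def using alg_DOm[OF vb(3), of "Sp t" "R1 t" "R2 t * cos (2 * psi t)"]
      by (simp add: algebra_simps)
    have e2: "(- (2 * v t * Dv t)) / (1 - (v t)^2) / 3 - 2 * v t * Dv t / (3 + (v t)^2) = - 8 * Sp t * (v t)^2 / (3 + (v t)^2)"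
      unfolding Dv_def using alg_Dv[of "v t" "Sp t"] vb by simp
    have "(- (2 * Sp t * DS t) - DR1 t) / Om t = 2 * ((Sp t)^2 + X t + 4 * Sp t * (v t)^2 / (3 + (v t)^2))"
      unfolding e1 using Op by simp
    thus ?thesis using e2 by (simp add: algebra_simps)
  qed
  moreover have "LPhi = (\<lambda>t. ln (Om t) + ln (1 - (v t)^2) / 3 - ln (3 + (v t)^2))" by (rule ext) (simp add: LPhi_def)
  ultimately show ?thesis by simp
qed

lemma dlnM: assumes "t > \<tau>0" "M t > 0"
  shows "((\<lambda>t. ln (M t)) has_real_derivative (-((1 + Sp t)^2 + X t + 3 * M t * Y t))) (at t)"
proof -
  have "((\<lambda>t. ln (M t)) has_real_derivative DM t / M t) (at t)"
    using dM'[OF assms(1)] assms(2) by (auto intro!: derivative_eq_intros)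
  moreover have "DM t / M t = -((1 + Sp t)^2 + X t + 3 * M t * Y t)" unfolding DM_eq using assms(2) by simp
  ultimately show ?thesis by simp
qed

lemma dlnR1: assumes "t > \<tau>0"
  shows "((\<lambda>t. ln (R1 t)) has_real_derivative (2 * ((1 + Sp t) * Sp t + X t) - 2 * (1 + Sp t) * p t)) (at t)"
proof -
  have t: "t \<ge> \<tau>0" using assms by simp
  have Rp: "R1 t > 0" using R1pos[OF t] .
  have "((\<lambda>t. ln (R1 t)) has_real_derivative DR1 t / R1 t) (at t)"
    using dR1'[OF assms(1)] Rp by (auto intro!: derivative_eq_intros)
  moreover have "DR1 t / R1 t = 2 * ((1 + Sp t) * Sp t + X t) - 2 * (1 + Sp t) * p t"
    unfolding DR1_eq p_def using Rp by (simp add: field_simps)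
  ultimately show ?thesis by simp
qed

lemma dLmr: assumes "t > \<tau>0" "M t > 0"
  shows "(Lmr has_real_derivative (- (1 - (Sp t)^2) + errs t)) (at t)"
proof -
  have "((\<lambda>t. ln (M t) + ln (R1 t) - MY t / 4 + BMQ t / 4) has_real_derivative
     (-((1 + Sp t)^2 + X t + 3 * M t * Y t)) + (2 * ((1 + Sp t) * Sp t + X t) - 2 * (1 + Sp t) * p t)
     - (4 * X t - MY t * E1 t) / 4 + (2 * DS t * Mq t + 2 * (1 + Sp t) * (4 * p t - Mq t * E2 t)) / 4) (at t)"
    by (intro derivative_intros DERIV_cdivide dlnM[OF assms] dlnR1[OF assms(1)] dMY[OF assms(1)] dBMQ[OF assms(1)])
  moreover have "(-((1 + Sp t)^2 + X t + 3 * M t * Y t)) + (2 * ((1 + Sp t) * Sp t + X t) - 2 * (1 + Sp t) * p t)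
     - (4 * X t - MY t * E1 t) / 4 + (2 * DS t * Mq t + 2 * (1 + Sp t) * (4 * p t - Mq t * E2 t)) / 4
     = - (1 - (Sp t)^2) + errs t"
    unfolding errs_def MY_def by (simp add: field_simps power2_eq_square)
  moreover have "Lmr = (\<lambda>t. ln (M t) + ln (R1 t) - MY t / 4 + BMQ t / 4)" by (rule ext) (simp add: Lmr_def)
  ultimately show ?thesis by simp
qed

lemma M_tendsto: "(M \<longlongrightarrow> 0) at_top"
  using Mlim unfolding filterlim_at by simp

lemma M_ev: assumes "e > 0" shows "eventually (\<lambda>t. 0 < M t \<and> M t < e) at_top"
proof -
  have "eventually (\<lambda>t. M t \<in> {0<..} \<and> M t \<noteq> 0) at_top" using Mlim unfolding filterlim_at by simp
  moreover have "eventually (\<lambda>t. M t < e) at_top" using order_tendstoD(2)[OF M_tendsto assms] .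
  ultimately show ?thesis by eventually_elim simp
qed

lemma pq_bd: assumes t: "t \<ge> \<tau>0" shows "\<bar>p t\<bar> \<le> 1" "\<bar>q t\<bar> \<le> 1"
proof -
  have Rp: "R1 t > 0" using R1pos[OF t] .
  have "\<bar>p t\<bar> = \<bar>X t\<bar> / R1 t" unfolding p_def using Rp by (simp add: abs_divide)
  thus "\<bar>p t\<bar> \<le> 1" using XY_bd(3)[OF t] Rp by (simp add: divide_le_eq)
  have "\<bar>q t\<bar> = \<bar>Y t\<bar> / R1 t" unfolding q_def using Rp by (simp add: abs_divide)
  thus "\<bar>q t\<bar> \<le> 1" using XY_bd(4)[OF t] Rp by (simp add: divide_le_eq)
qed

lemma MY_bd: assumes t: "t \<ge> \<tau>0" and M0: "M t \<ge> 0"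
  shows "\<bar>MY t\<bar> \<le> M t * R1 t" "\<bar>Mq t\<bar> \<le> M t" "\<bar>MY t\<bar> \<le> M t"
proof -
  have e1: "\<bar>MY t\<bar> = M t * \<bar>Y t\<bar>" unfolding MY_def abs_mult using M0 by simp
  show 1: "\<bar>MY t\<bar> \<le> M t * R1 t" unfolding e1 by (rule mult_left_mono) (use M0 XY_bd(4)[OF t] in auto)
  have e2: "\<bar>Mq t\<bar> = M t * \<bar>q t\<bar>" unfolding Mq_def abs_mult using M0 by simp
  have "M t * \<bar>q t\<bar> \<le> M t * 1" by (rule mult_left_mono) (use M0 pq_bd(2)[OF t] in auto)
  thus "\<bar>Mq t\<bar> \<le> M t" unfolding e2 by simp
  have "M t * R1 t \<le> M t * 1" by (rule mult_left_mono) (use M0 R1_lt(2)[OF t] in auto)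
  thus "\<bar>MY t\<bar> \<le> M t" using 1 by simp
qed

lemma E1_bd: assumes t: "t \<ge> \<tau>0" and M0: "M t \<ge> 0" "M t \<le> 1/3"
  shows "\<bar>E1 t\<bar> \<le> 3 * (1 - (Sp t)^2)"
proof -
  have w: "R1 t \<le> 1 - (Sp t)^2" using R1_lt[OF t] by simp
  have a: "\<bar>X t\<bar> \<le> 1 - (Sp t)^2" using XY_bd(3)[OF t] w by simp
  have b: "\<bar>3 * M t * Y t\<bar> \<le> 1 - (Sp t)^2"
  proof -
    have "\<bar>3 * M t * Y t\<bar> = 3 * M t * \<bar>Y t\<bar>" using M0 by (simp add: abs_mult)
    also have "\<dots> \<le> 1 * \<bar>Y t\<bar>" using M0 by (intro mult_right_mono) auto
    also have "\<dots> \<le> 1 - (Sp t)^2" using XY_bd(4)[OF t] w by simp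
    finally show ?thesis .
  qed
  have c: "0 \<le> 1 - (Sp t)^2" using S_bd[OF t] by simp
  have a1: "X t \<le> 1 - (Sp t)^2" "- X t \<le> 1 - (Sp t)^2" using a by (simp_all add: abs_le_iff)
  have b1: "3 * M t * Y t \<le> 1 - (Sp t)^2" "- (3 * M t * Y t) \<le> 1 - (Sp t)^2" using b by (simp_all add: abs_le_iff)
  have "1 - (Sp t)^2 - X t + 3 * M t * Y t \<le> 3 * (1 - (Sp t)^2)" using a1 b1 by argo
  moreover have "- (1 - (Sp t)^2 - X t + 3 * M t * Y t) \<le> 3 * (1 - (Sp t)^2)" using a1 b1 c by argo
  ultimately show ?thesis unfolding E1_def abs_le_iff by blast
qed

lemma E2_bd: assumes t: "t \<ge> \<tau>0" and M0: "M t \<ge> 0" "M t \<le> 1/3"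
  shows "\<bar>E2 t\<bar> \<le> 10"
proof -
  have S: "-1 < Sp t" "Sp t < 1" using S_bd[OF t] by auto
  have a: "(1 + Sp t)^2 \<le> 2^2" using S by (intro power_mono) auto
  have a0: "(1 + Sp t)^2 \<ge> 0" by simp
  have b: "\<bar>X t\<bar> \<le> 1" using XY_bd(3)[OF t] R1_lt(2)[OF t] by simp
  have c: "\<bar>3 * M t * Y t\<bar> \<le> 1"
  proof -
    have "\<bar>3 * M t * Y t\<bar> = 3 * M t * \<bar>Y t\<bar>" using M0 by (simp add: abs_mult)
    also have "\<dots> \<le> 1 * 1" using M0 XY_bd(4)[OF t] R1_lt(2)[OF t] by (intro mult_mono) auto
    finally show ?thesis by simp
  qed
  have d: "\<bar>2 * (1 + Sp t) * p t\<bar> \<le> 4"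
  proof -
    have "\<bar>2 * (1 + Sp t) * p t\<bar> = 2 * (1 + Sp t) * \<bar>p t\<bar>" using S by (simp add: abs_mult)
    also have "\<dots> \<le> 4 * 1" using S pq_bd(1)[OF t] by (intro mult_mono) auto
    finally show ?thesis by simp
  qed
  have b1: "X t \<le> 1" "- X t \<le> 1" using b by (simp_all add: abs_le_iff)
  have c1: "3 * M t * Y t \<le> 1" "- (3 * M t * Y t) \<le> 1" using c by (simp_all add: abs_le_iff)
  have d1: "2 * (1 + Sp t) * p t \<le> 4" "- (2 * (1 + Sp t) * p t) \<le> 4" using d by (simp_all add: abs_le_iff)
  have a1: "(1 + Sp t)^2 \<le> 4" using a by simp
  have "(1 + Sp t)^2 + X t + 3 * M t * Y t - 2 * (1 + Sp t) * p t \<le> 10" using a1 b1 c1 d1 by argo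
  moreover have "- ((1 + Sp t)^2 + X t + 3 * M t * Y t - 2 * (1 + Sp t) * p t) \<le> 10" using a0 b1 c1 d1 by argo
  ultimately show ?thesis unfolding E2_def abs_le_iff by blast
qed

lemma onepS_bd: assumes t: "t \<ge> \<tau>0" and m: "Sp t \<le> m" "m < 1"
  shows "1 + Sp t \<le> (1 - (Sp t)^2) / (1 - m)"
proof -
  have S: "-1 < Sp t" using S_bd[OF t] by auto
  have "(1 + Sp t) * (1 - m) \<le> (1 + Sp t) * (1 - Sp t)" using S m by (intro mult_left_mono) auto
  also have "\<dots> = 1 - (Sp t)^2" by (simp add: power2_eq_square algebra_simps)
  finally show ?thesis using m by (simp add: le_divide_eq)
qed

lemma errs_bd: assumes t: "t \<ge> \<tau>0" and M0: "M t \<ge> 0" "M t \<le> 1/3" and m: "Sp t \<le> m" "m < 1"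
  shows "\<bar>errs t\<bar> \<le> (7 + 5 / (1 - m)) * M t * (1 - (Sp t)^2)"
proof -
  define w where "w = 1 - (Sp t)^2"
  have w0: "w > 0" unfolding w_def using S_bd[OF t] by simp
  have S: "-1 < Sp t" "Sp t < 1" using S_bd[OF t] by auto
  have Rw: "R1 t \<le> w" unfolding w_def using R1_lt[OF t] by simp
  have a: "\<bar>3 * MY t\<bar> \<le> 3 * M t * w"
  proof -
    have "M t * R1 t \<le> M t * w" by (rule mult_left_mono) (use Rw M0 in auto)
    thus ?thesis using MY_bd(1)[OF t M0(1)] by simp
  qed
  have b: "\<bar>MY t * E1 t / 4\<bar> \<le> 3/4 * M t * w"
  proof -
    have "\<bar>MY t * E1 t\<bar> \<le> M t * 1 * (3 * w)"
      unfolding abs_mult using MY_bd(3)[OF t M0(1)] E1_bd[OF t M0] w_def by (intro mult_mono) auto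
    thus ?thesis by simp
  qed
  have c: "\<bar>DS t * Mq t / 2\<bar> \<le> 5/2 * M t * w"
  proof -
    have "\<bar>DS t * Mq t\<bar> \<le> (5 * w) * M t"
      unfolding abs_mult using MY_bd(2)[OF t M0(1)] DS_bd[OF t] w_def w0 by (intro mult_mono) auto
    moreover have "(5 * w) * M t = 5 * M t * w" by simp
    moreover have "\<bar>DS t * Mq t / 2\<bar> = \<bar>DS t * Mq t\<bar> / 2" by simp
    ultimately show ?thesis by argo
  qed
  have d: "\<bar>(1 + Sp t) * Mq t * E2 t / 2\<bar> \<le> 5 / (1 - m) * M t * w"
  proof -
    have "\<bar>(1 + Sp t) * Mq t * E2 t\<bar> \<le> (w / (1 - m)) * M t * 10"
      unfolding abs_mult using MY_bd(2)[OF t M0(1)] E2_bd[OF t M0] onepS_bd[OF t m] S w_def M0 w0 m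
      by (intro mult_mono) auto
    hence "\<bar>(1 + Sp t) * Mq t * E2 t\<bar> / 2 \<le> ((w / (1 - m)) * M t * 10) / 2" by (rule divide_right_mono) simp
    also have "\<dots> = 5 / (1 - m) * M t * w" using m by (simp add: field_simps)
    finally show ?thesis by simp
  qed
  have "\<bar>errs t\<bar> \<le> \<bar>3 * MY t\<bar> + \<bar>MY t * E1 t / 4\<bar> + \<bar>DS t * Mq t / 2\<bar> + \<bar>(1 + Sp t) * Mq t * E2 t / 2\<bar>"
    unfolding errs_def by argo
  also have "\<dots> \<le> 3 * M t * w + 3/4 * M t * w + 5/2 * M t * w + 5 / (1 - m) * M t * w"
    using a b c d by argo
  also have "\<dots> = (25/4 + 5 / (1 - m)) * (M t * w)" by (simp add: algebra_simps)
  also have "\<dots> \<le> (7 + 5 / (1 - m)) * (M t * w)" using M0 w0 by (intro mult_right_mono) auto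
  also have "\<dots> = (7 + 5 / (1 - m)) * M t * w" by simp
  finally show ?thesis unfolding w_def .
qed


lemma H_lower: assumes t: "t \<ge> \<tau>0" and M0: "M t > 0" "M t \<le> 1/3"
  shows "exp (Lmr t) \<ge> M t * R1 t / 2"
proof -
  have Rp: "R1 t > 0" using R1pos[OF t] .
  have S: "-1 < Sp t" "Sp t < 1" using S_bd[OF t] by auto
  have "Lmr t = ln (M t) + ln (R1 t) + (- MY t / 4 + BMQ t / 4)" unfolding Lmr_def by simp
  hence "exp (Lmr t) = exp (ln (M t)) * exp (ln (R1 t)) * exp (- MY t / 4 + BMQ t / 4)"
    by (simp add: exp_add)
  hence e: "exp (Lmr t) = M t * R1 t * exp (- MY t / 4 + BMQ t / 4)" using M0 Rp by simp
  have b1: "\<bar>MY t\<bar> \<le> M t" using MY_bd(3)[OF t] M0 by simp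
  have b2: "\<bar>BMQ t\<bar> \<le> 4 * M t"
  proof -
    have "\<bar>BMQ t\<bar> = 2 * (1 + Sp t) * \<bar>Mq t\<bar>" unfolding BMQ_def using S by (simp add: abs_mult)
    also have "\<dots> \<le> 4 * M t" by (rule mult_mono) (use S MY_bd(2)[OF t] M0 in auto)
    finally show ?thesis .
  qed
  have b3: "MY t \<le> M t" "- 4 * M t \<le> BMQ t" using b1 b2 by (simp_all add: abs_le_iff)
  have "- MY t / 4 + BMQ t / 4 \<ge> - 1/2" using b3 M0 by argo
  hence "exp (- MY t / 4 + BMQ t / 4) \<ge> 1/2"
    using exp_ge_add_one_self[of "- MY t / 4 + BMQ t / 4"] by argo
  hence "M t * R1 t * exp (- MY t / 4 + BMQ t / 4) \<ge> M t * R1 t * (1/2)"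
    using M0 Rp by (intro mult_left_mono) auto
  thus ?thesis unfolding e by argo
qed

end

context sys
begin

lemma DV2_ge:
  assumes t: "t \<ge> \<tau>0" and M0: "0 < M t" "M t \<le> 1/3" and m: "Sp t \<le> m" "m < 1"
    and C: "(7 + 5 / (1 - m)) * M t \<le> 1/2"
  shows "2 * (Sp t)^2 + 2 * X t - (4 * X t - MY t * E1 t) / 2 - 8 * exp (Lmr t) * (- (1 - (Sp t)^2) + errs t) \<ge> 2 * (Sp t)^2"
proof -
  define w where "w = 1 - (Sp t)^2"
  define H where "H = exp (Lmr t)"
  define C where "C = 7 + 5 / (1 - m)"
  have w0: "w > 0" unfolding w_def using S_bd[OF t] by simp
  have H0: "H > 0" unfolding H_def by simp
  have "1 - m > 0" using m by simp
  hence "5 / (1 - m) > 0" by simp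
  hence C0: "C > 0" unfolding C_def by argo
  have f1: "\<bar>MY t * E1 t\<bar> \<le> (M t * R1 t) * (3 * w)"
    unfolding abs_mult using MY_bd(1)[OF t] E1_bd[OF t] M0 w_def by (intro mult_mono) auto
  have f2: "H * errs t \<le> H * (C * M t * w)"
  proof -
    have "errs t \<le> C * M t * w" using errs_bd[OF t _ M0(2) m] M0 unfolding C_def w_def by (simp add: abs_le_iff)
    thus ?thesis using H0 by (intro mult_left_mono) auto
  qed
  have f3: "8 * (H * (C * M t * w)) \<le> 4 * (H * w)"
  proof -
    have "H * (C * M t * w) = (C * M t) * (H * w)" by simp
    also have "\<dots> \<le> (1/2) * (H * w)" using C H0 w0 unfolding C_def by (intro mult_right_mono) auto
    finally show ?thesis by argo
  qed
  have f4: "(M t * R1 t) * (3 * w) \<le> 6 * (H * w)"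
  proof -
    have "M t * R1 t \<le> 2 * H" using H_lower[OF t M0] unfolding H_def by simp
    hence "(M t * R1 t) * (3 * w) \<le> (2 * H) * (3 * w)" using w0 by (intro mult_right_mono) auto
    thus ?thesis by simp
  qed
  have Hw: "H * w \<ge> 0" using H0 w0 by simp
  have eq: "2 * (Sp t)^2 + 2 * X t - (4 * X t - MY t * E1 t) / 2 - 8 * exp (Lmr t) * (- (1 - (Sp t)^2) + errs t)
     = 2 * (Sp t)^2 + (MY t * E1 t) / 2 + 8 * (H * w) - 8 * (H * errs t)"
    unfolding H_def w_def by (simp add: field_simps)
  have "(MY t * E1 t) / 2 \<ge> - 3 * (H * w)" using f1 f4 by (simp add: abs_le_iff) argo
  thus ?thesis unfolding eq using f2 f3 Hw by argo
qed

lemma LPhi_le: assumes t: "t \<ge> \<tau>0" shows "LPhi t \<le> 0"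
proof -
  have "Om t \<le> 1" unfolding Om_def using R1pos[OF t] by (smt (verit) zero_le_power2)
  hence a: "ln (Om t) \<le> 0" using Om_pos[OF t] by simp
  have vb: "0 < 1 - (v t)^2" "1 - (v t)^2 \<le> 1" using v_bd[OF t] by auto
  hence b: "ln (1 - (v t)^2) \<le> 0" by simp
  have c: "ln (3 + (v t)^2) \<ge> 0" by (simp add: add_increasing)
  show ?thesis unfolding LPhi_def using a b c by argo
qed

lemma S_to_0: "(Sp \<longlongrightarrow> 0) at_top"
proof -
  obtain m where m: "0 < m" "m < 1" "\<And>t. t \<ge> \<tau>0 + 1 \<Longrightarrow> Sp t \<le> m" using S_upper by blast
  define C where "C = 7 + 5 / (1 - m)"
  have "1 - m > 0" using m by simp
  hence "5 / (1 - m) > 0" by simp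
  hence C0: "C > 0" unfolding C_def by argo
  define \<mu> where "\<mu> = min (1/3) (1 / (2 * C))"
  have mu0: "\<mu> > 0" unfolding \<mu>_def using C0 by simp
  have "eventually (\<lambda>t. (0 < M t \<and> M t < \<mu>) \<and> t \<ge> \<tau>0 + 1) at_top"
    using M_ev[OF mu0] eventually_ge_at_top by (rule eventually_conj)
  then obtain T1 where T1: "\<And>t. t \<ge> T1 \<Longrightarrow> (0 < M t \<and> M t < \<mu>) \<and> t \<ge> \<tau>0 + 1"
    unfolding eventually_at_top_linorder by blast
  have T1' : "\<And>t. t \<ge> T1 \<Longrightarrow> 0 < M t" "\<And>t. t \<ge> T1 \<Longrightarrow> M t \<le> 1/3"
    "\<And>t. t \<ge> T1 \<Longrightarrow> C * M t \<le> 1/2" "\<And>t. t \<ge> T1 \<Longrightarrow> t > \<tau>0" "\<And>t. t \<ge> T1 \<Longrightarrow> Sp t \<le> m"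
  proof -
    fix t assume t: "t \<ge> T1"
    show "0 < M t" using T1[OF t] by simp
    show "M t \<le> 1/3" using T1[OF t] unfolding \<mu>_def by simp
    have "M t \<le> 1 / (2 * C)" using T1[OF t] unfolding \<mu>_def by simp
    thus "C * M t \<le> 1/2" using C0 by (simp add: le_divide_eq algebra_simps)
    show "t > \<tau>0" using T1[OF t] by simp
    show "Sp t \<le> m" using T1[OF t] m(3) by simp
  qed
  define V2 where "V2 = (\<lambda>t. LPhi t - MY t / 2 - 8 * exp (Lmr t))"
  define DV2 where "DV2 = (\<lambda>t. 2 * (Sp t)^2 + 2 * X t - (4 * X t - MY t * E1 t) / 2 - 8 * exp (Lmr t) * (- (1 - (Sp t)^2) + errs t))"
  have dV2: "(V2 has_real_derivative DV2 t) (at t)" if t: "t \<ge> T1" for t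
  proof -
    have tt: "t > \<tau>0" using T1'(4)[OF t] .
    have dE: "((\<lambda>t. exp (Lmr t)) has_real_derivative exp (Lmr t) * (- (1 - (Sp t)^2) + errs t)) (at t)"
      using dLmr[OF tt T1'(1)[OF t]] by (auto intro!: derivative_eq_intros)
    have "(V2 has_real_derivative (2 * (Sp t)^2 + 2 * X t - (4 * X t - MY t * E1 t) / 2 - 8 * (exp (Lmr t) * (- (1 - (Sp t)^2) + errs t)))) (at t)"
      unfolding V2_def by (intro derivative_intros DERIV_cdivide DERIV_cmult dE dLPhi[OF tt] dMY[OF tt])
    moreover have "2 * (Sp t)^2 + 2 * X t - (4 * X t - MY t * E1 t) / 2 - 8 * (exp (Lmr t) * (- (1 - (Sp t)^2) + errs t)) = DV2 t"
      unfolding DV2_def by simp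
    ultimately show ?thesis by simp
  qed
  have DV2_ge': "DV2 t \<ge> 2 * (Sp t)^2" if t: "t \<ge> T1" for t
    unfolding DV2_def using DV2_ge[of t m] T1'[OF t] m C_def by simp
  have V2_le: "V2 t \<le> 1/2" if t: "t \<ge> T1" for t
  proof -
    have tt: "t \<ge> \<tau>0" using T1'(4)[OF t] by simp
    have "\<bar>MY t\<bar> \<le> M t" using MY_bd(3)[OF tt] T1'(1)[OF t] by simp
    hence "- MY t / 2 \<le> 1/2" using T1'(2)[OF t] by (simp add: abs_le_iff)
    moreover have "LPhi t \<le> 0" using LPhi_le[OF tt] .
    moreover have "exp (Lmr t) \<ge> 0" by simp
    ultimately show ?thesis unfolding V2_def by argo
  qed
  obtain L where L: "(V2 \<longlongrightarrow> L) at_top"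
    using mono_bdd_conv[of T1 V2 DV2 "1/2"] dV2 V2_le DV2_ge' by (smt (verit) zero_le_power2)
  have "((\<lambda>t. 2 * (Sp t)^2) \<longlongrightarrow> 0) at_top"
  proof (rule drain_to_zero[where F = "\<lambda>t. L - V2 t" and DF = "\<lambda>t. - DV2 t" and g = "\<lambda>t. 0"
        and Df = "\<lambda>t. 4 * Sp t * DS t" and B = 20 and T = T1])
    fix x assume x: "x \<ge> T1"
    have xx: "x > \<tau>0" using T1'(4)[OF x] .
    show "((\<lambda>t. L - V2 t) has_real_derivative - DV2 x) (at x)"
      using dV2[OF x] by (auto intro!: derivative_eq_intros)
    show "- DV2 x \<le> - (2 * (Sp x)^2) + 0" using DV2_ge'[OF x] by simp
    show "((\<lambda>t. 2 * (Sp t)^2) has_real_derivative 4 * Sp x * DS x) (at x)"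
      using dS'[OF xx] by (auto intro!: derivative_eq_intros)
    have "\<bar>Sp x\<bar> \<le> 1" using S_bd[of x] xx by simp
    moreover have "\<bar>DS x\<bar> \<le> 5" using DS_bd[of x] xx by (smt (verit) zero_le_power2)
    ultimately have "\<bar>Sp x\<bar> * \<bar>DS x\<bar> \<le> 1 * 5" by (intro mult_mono) auto
    thus "\<bar>4 * Sp x * DS x\<bar> \<le> 20" by (simp add: abs_mult)
    show "0 \<le> 2 * (Sp x)^2" by simp
  next
    show "((\<lambda>t. L - V2 t) \<longlongrightarrow> 0) at_top" using L by (intro tendsto_eq_intros) auto
  qed auto
  hence "((\<lambda>t. (Sp t)^2) \<longlongrightarrow> 0) at_top" using tendsto_mult_left[of _ 0 _ "1/2"] by force
  thus ?thesis by simp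
qed

end

context sys
begin

lemma ev_M_small: assumes "e > 0" shows "eventually (\<lambda>t. t > \<tau>0 \<and> 0 < M t \<and> M t \<le> e) at_top"
proof -
  have "eventually (\<lambda>t. (0 < M t \<and> M t < e) \<and> t \<ge> \<tau>0 + 1) at_top"
    using M_ev[OF assms] eventually_ge_at_top by (rule eventually_conj)
  thus ?thesis by eventually_elim auto
qed

lemma MY_to_0: "(MY \<longlongrightarrow> 0) at_top"
proof (rule Lim_null_comparison[OF _ M_tendsto])
  show "eventually (\<lambda>t. norm (MY t) \<le> M t) at_top"
    using ev_M_small[OF zero_less_one] by eventually_elim (use MY_bd(3) in auto)
qed

lemma R1_to_0: "(R1 \<longlongrightarrow> 0) at_top"
proof -
  define V3 where "V3 = (\<lambda>t. Sp t - (1 + Sp t) * MY t / 4)"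
  define DV3 where "DV3 = (\<lambda>t. DS t - (DS t * MY t + (1 + Sp t) * (4 * X t - MY t * E1 t)) / 4)"
  obtain T where T: "\<And>t. t \<ge> T \<Longrightarrow> t > \<tau>0 \<and> 0 < M t \<and> M t \<le> 1/3"
    using ev_M_small[of "1/3"] unfolding eventually_at_top_linorder by auto
  show ?thesis
  proof (rule drain_to_zero[where F = V3 and DF = DV3 and g = "\<lambda>t. \<bar>Sp t\<bar> + 3 * M t"
        and Df = DR1 and B = 10 and T = T])
    fix x assume x: "x \<ge> T"
    have xx: "x > \<tau>0" "0 < M x" "M x \<le> 1/3" using T[OF x] by auto
    have x0: "x \<ge> \<tau>0" using xx by simp
    show "(V3 has_real_derivative DV3 x) (at x)"
    proof -
      have "((\<lambda>t. Sp t - (1 + Sp t) * MY t / 4) has_real_derivative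
          DS x - (DS x * MY x + (1 + Sp x) * (4 * X x - MY x * E1 x)) / 4) (at x)"
        using dS'[OF xx(1)] dMY[OF xx(1)] by (auto intro!: derivative_eq_intros simp: field_simps)
      thus ?thesis unfolding V3_def DV3_def by simp
    qed
    show "(R1 has_real_derivative DR1 x) (at x)" using dR1'[OF xx(1)] .
    show "0 \<le> R1 x" using R1pos[OF x0] by simp
    have S: "-1 < Sp x" "Sp x < 1" using S_bd[OF x0] by auto
    show "\<bar>DR1 x\<bar> \<le> 10"
    proof -
      have a: "\<bar>(1 + Sp x) * Sp x + X x\<bar> \<le> 3"
      proof -
        have "\<bar>(1 + Sp x) * Sp x\<bar> \<le> 2 * 1" unfolding abs_mult using S by (intro mult_mono) auto
        moreover have "\<bar>X x\<bar> \<le> 1" using XY_bd(3)[OF x0] R1_lt(2)[OF x0] by simp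
        ultimately show ?thesis by (smt (verit))
      qed
      have b: "\<bar>2 * ((1 + Sp x) * Sp x + X x) * R1 x\<bar> \<le> 6"
      proof -
        have "\<bar>((1 + Sp x) * Sp x + X x) * R1 x\<bar> \<le> 3 * 1" unfolding abs_mult
          using a R1pos[OF x0] R1_lt(2)[OF x0] by (intro mult_mono) auto
        moreover have "\<bar>2 * ((1 + Sp x) * Sp x + X x) * R1 x\<bar> = 2 * \<bar>((1 + Sp x) * Sp x + X x) * R1 x\<bar>"
          by (simp only: abs_mult abs_numeral mult.assoc)
        ultimately show ?thesis by argo
      qed
      have c: "\<bar>2 * (1 + Sp x) * X x\<bar> \<le> 4"
      proof -
        have "\<bar>(1 + Sp x) * X x\<bar> \<le> 2 * 1" unfolding abs_mult
          using S XY_bd(3)[OF x0] R1_lt(2)[OF x0] by (intro mult_mono) auto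
        moreover have "\<bar>2 * (1 + Sp x) * X x\<bar> = 2 * \<bar>(1 + Sp x) * X x\<bar>"
          by (simp only: abs_mult abs_numeral mult.assoc)
        ultimately show ?thesis by argo
      qed
      show ?thesis unfolding DR1_eq using b c by (smt (verit))
    qed
    show "DV3 x \<le> - R1 x + (\<bar>Sp x\<bar> + 3 * M x)"
    proof -
      have vv: "0 < 3 + (v x)^2" using v_bd[OF x0] by simp
      have e: "DV3 x = - (1 - (Sp x)^2) * Sp x - R1 x - 4 * Om x * (v x)^2 / (3 + (v x)^2)
          - DS x * MY x / 4 + (1 + Sp x) * MY x * E1 x / 4"
        unfolding DV3_def DS_def Om_def Omg_def X_def by (simp add: field_simps)
      have a: "- (1 - (Sp x)^2) * Sp x \<le> \<bar>Sp x\<bar>"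
      proof -
        have "\<bar>(1 - (Sp x)^2) * Sp x\<bar> \<le> 1 * \<bar>Sp x\<bar>" unfolding abs_mult using S_bd[OF x0]
          by (intro mult_right_mono) auto
        moreover have "- ((1 - (Sp x)^2) * Sp x) \<le> \<bar>(1 - (Sp x)^2) * Sp x\<bar>" by (rule abs_ge_minus_self)
        moreover have "- (1 - (Sp x)^2) * Sp x = - ((1 - (Sp x)^2) * Sp x)" by (simp only: minus_mult_left)
        ultimately show ?thesis by argo
      qed
      have b: "4 * Om x * (v x)^2 / (3 + (v x)^2) \<ge> 0" using Om_pos[OF x0] vv by simp
      have c: "\<bar>DS x * MY x / 4\<bar> \<le> 5 * M x / 4"
      proof -
        have "\<bar>DS x * MY x\<bar> \<le> 5 * M x" unfolding abs_mult
          using DS_bd[OF x0] MY_bd(3)[OF x0] xx by (intro mult_mono) (auto, smt (verit) zero_le_power2)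
        thus ?thesis by simp
      qed
      have d: "\<bar>(1 + Sp x) * MY x * E1 x / 4\<bar> \<le> 3 * M x / 2"
      proof -
        have "\<bar>(1 + Sp x) * MY x\<bar> \<le> 2 * M x" unfolding abs_mult
          using S MY_bd(3)[OF x0] xx by (intro mult_mono) auto
        moreover have "\<bar>E1 x\<bar> \<le> 3" using E1_bd[OF x0] xx by (smt (verit) zero_le_power2)
        ultimately have "\<bar>(1 + Sp x) * MY x\<bar> * \<bar>E1 x\<bar> \<le> (2 * M x) * 3"
          using xx by (intro mult_mono) auto
        hence "\<bar>(1 + Sp x) * MY x * E1 x\<bar> \<le> (2 * M x) * 3" by (simp only: abs_mult[of "(1 + Sp x) * MY x"])
        thus ?thesis by simp
      qed
      have c1: "- (DS x * MY x / 4) \<le> 5 * M x / 4" using c by (simp only: abs_le_iff)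
      have d1: "(1 + Sp x) * MY x * E1 x / 4 \<le> 3 * M x / 2" using d by (simp only: abs_le_iff)
      show ?thesis unfolding e using a b c1 d1 xx by argo
    qed
  next
    show "(V3 \<longlongrightarrow> 0) at_top" unfolding V3_def
      using S_to_0 MY_to_0 by (auto intro!: tendsto_eq_intros)
    show "((\<lambda>t. \<bar>Sp t\<bar> + 3 * M t) \<longlongrightarrow> 0) at_top"
      using S_to_0 M_tendsto by (auto intro!: tendsto_eq_intros)
  qed
qed

lemma R2_to_0: "(R2 \<longlongrightarrow> 0) at_top"
proof (rule Lim_null_comparison[OF _ R1_to_0])
  show "eventually (\<lambda>t. norm (R2 t) \<le> R1 t) at_top"
    using eventually_ge_at_top[of \<tau>0] by eventually_elim (use R2_le_R1 R2pos in force)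
qed

lemma Om_to_1: "(Om \<longlongrightarrow> 1) at_top"
proof -
  have "((\<lambda>t. 1 - (Sp t)^2 - R1 t) \<longlongrightarrow> 1 - 0^2 - 0) at_top"
    using S_to_0 R1_to_0 by (intro tendsto_intros)
  thus ?thesis unfolding Om_def[abs_def] by simp
qed

lemma v_to_0: "(v \<longlongrightarrow> 0) at_top"
proof (rule Lim_null_comparison)
  show "((\<lambda>t. R1 t / Om t) \<longlongrightarrow> 0) at_top"
    using tendsto_divide[OF R1_to_0 Om_to_1] by simp
  show "eventually (\<lambda>t. norm (v t) \<le> R1 t / Om t) at_top"
    using eventually_ge_at_top[of \<tau>0]
  proof eventually_elim
    case (elim t)
    have Op: "Om t > 0" using Om_pos[OF elim] .
    have vv: "0 < 3 + (v t)^2" "(v t)^2 < 1" using v_bd[OF elim] by auto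
    define K where "K = 4 * Om t * v t / (3 + (v t)^2)"
    have "K^2 \<le> (R1 t)^2" using constr[OF elim] unfolding K_def Omg_def Om_def by (smt (verit) zero_le_power2)
    hence K: "\<bar>K\<bar> \<le> R1 t" using R1pos[OF elim] by (simp add: power2_le_iff_abs_le)
    have "\<bar>4 * Om t * v t\<bar> = \<bar>K\<bar> * (3 + (v t)^2)" unfolding K_def using vv by (simp add: abs_mult abs_divide)
    also have "\<dots> \<le> R1 t * 4" using K vv by (intro mult_mono) auto
    finally have "Om t * \<bar>v t\<bar> \<le> R1 t" using Op by (simp add: abs_mult)
    thus ?case using Op by (simp add: le_divide_eq mult.commute)
  qed
qed

end

context sys
begin

definition "L4 (a::real) t = ln (R1 t) - a * ln (M t) - (2 + a) * MY t / 4 + BMQ t / 4"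
definition "D4 (a::real) t = 2 * (1 + Sp t) * Sp t + a * (1 + Sp t)^2 + 3 * a * MY t + (2 + a) * MY t * E1 t / 4
   + DS t * Mq t / 2 - (1 + Sp t) * Mq t * E2 t / 2"

lemma dL4: assumes "t > \<tau>0" "M t > 0" shows "(L4 a has_real_derivative D4 a t) (at t)"
proof -
  have "((\<lambda>t. ln (R1 t) - a * ln (M t) - (2 + a) * MY t / 4 + BMQ t / 4) has_real_derivative
     (2 * ((1 + Sp t) * Sp t + X t) - 2 * (1 + Sp t) * p t) - a * (-((1 + Sp t)^2 + X t + 3 * M t * Y t))
     - (2 + a) * (4 * X t - MY t * E1 t) / 4 + (2 * DS t * Mq t + 2 * (1 + Sp t) * (4 * p t - Mq t * E2 t)) / 4) (at t)"
    by (intro derivative_intros DERIV_cdivide DERIV_cmult dlnM[OF assms] dlnR1[OF assms(1)] dMY[OF assms(1)] dBMQ[OF assms(1)])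
  moreover have "(2 * ((1 + Sp t) * Sp t + X t) - 2 * (1 + Sp t) * p t) - a * (-((1 + Sp t)^2 + X t + 3 * M t * Y t))
     - (2 + a) * (4 * X t - MY t * E1 t) / 4 + (2 * DS t * Mq t + 2 * (1 + Sp t) * (4 * p t - Mq t * E2 t)) / 4 = D4 a t"
    unfolding D4_def MY_def by (simp add: field_simps)
  moreover have "L4 a = (\<lambda>t. ln (R1 t) - a * ln (M t) - (2 + a) * MY t / 4 + BMQ t / 4)"
    by (rule ext) (simp add: L4_def)
  ultimately show ?thesis by simp
qed

lemma ev_small: "eventually (\<lambda>t. t > \<tau>0 \<and> 0 < M t \<and> M t \<le> 1/88 \<and> \<bar>Sp t\<bar> \<le> 1/32) at_top"
proof -
  have "eventually (\<lambda>t. dist (Sp t) 0 < 1/32) at_top"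
    using S_to_0 by (rule tendstoD) simp
  hence "eventually (\<lambda>t. \<bar>Sp t\<bar> < 1/32) at_top" by (simp add: dist_real_def)
  moreover have "eventually (\<lambda>t. t > \<tau>0 \<and> 0 < M t \<and> M t \<le> 1/88) at_top" by (rule ev_M_small) simp
  ultimately show ?thesis by eventually_elim auto
qed

lemma D4_ge: assumes a: "1 \<le> a" "a \<le> 2" and t: "t > \<tau>0" "0 < M t" "M t \<le> 1/88" "\<bar>Sp t\<bar> \<le> 1/32"
  shows "D4 a t \<ge> 1/2"
proof -
  have t0: "t \<ge> \<tau>0" using t by simp
  have M3: "M t \<le> 1/3" using t by simp
  have S: "-1 < Sp t" "Sp t < 1" using S_bd[OF t0] by auto
  have p1: "2 * (1 + Sp t) * Sp t \<ge> - 4 * \<bar>Sp t\<bar>"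
  proof -
    have "\<bar>(1 + Sp t) * Sp t\<bar> \<le> 2 * \<bar>Sp t\<bar>" unfolding abs_mult using S by (intro mult_right_mono) auto
    hence "- ((1 + Sp t) * Sp t) \<le> 2 * \<bar>Sp t\<bar>" by (simp only: abs_le_iff)
    moreover have "2 * (1 + Sp t) * Sp t = 2 * ((1 + Sp t) * Sp t)" by (simp only: mult.assoc)
    ultimately show ?thesis by argo
  qed
  have p2: "a * (1 + Sp t)^2 \<ge> a - 4 * \<bar>Sp t\<bar>"
  proof -
    have "(1 + Sp t)^2 \<ge> 1 + 2 * Sp t" by (simp add: power2_eq_square algebra_simps)
    hence "a * (1 + Sp t)^2 \<ge> a * (1 + 2 * Sp t)" using a by (intro mult_left_mono) auto
    moreover have "a * (2 * Sp t) \<ge> - 4 * \<bar>Sp t\<bar>"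
    proof -
      have "\<bar>a * (2 * Sp t)\<bar> \<le> 2 * (2 * \<bar>Sp t\<bar>)" unfolding abs_mult using a by (intro mult_mono) auto
      thus ?thesis by (simp add: abs_le_iff)
    qed
    ultimately show ?thesis by (simp add: algebra_simps)
  qed
  have e1: "\<bar>3 * a * MY t\<bar> \<le> 6 * M t"
  proof -
    have "\<bar>3 * a\<bar> * \<bar>MY t\<bar> \<le> 6 * M t" using a MY_bd(3)[OF t0] t by (intro mult_mono[of _ 6 _ "M t", simplified]) auto
    thus ?thesis by (simp only: abs_mult)
  qed
  have e2: "\<bar>(2 + a) * MY t * E1 t / 4\<bar> \<le> 3 * M t"
  proof -
    have "\<bar>E1 t\<bar> \<le> 3" using E1_bd[OF t0 _ M3] t by (smt (verit) zero_le_power2)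
    have "\<bar>(2 + a) * MY t\<bar> \<le> 4 * M t" unfolding abs_mult using a MY_bd(3)[OF t0] t by (intro mult_mono) auto
    hence "\<bar>(2 + a) * MY t\<bar> * \<bar>E1 t\<bar> \<le> (4 * M t) * 3" using \<open>\<bar>E1 t\<bar> \<le> 3\<close> t by (intro mult_mono) auto
    hence "\<bar>(2 + a) * MY t * E1 t\<bar> \<le> 12 * M t" by (simp only: abs_mult[of "(2 + a) * MY t"])
    thus ?thesis by simp
  qed
  have e3: "\<bar>DS t * Mq t / 2\<bar> \<le> 3 * M t"
  proof -
    have "\<bar>DS t\<bar> \<le> 5" using DS_bd[OF t0] by (smt (verit) zero_le_power2)
    hence "\<bar>DS t\<bar> * \<bar>Mq t\<bar> \<le> 5 * M t" using MY_bd(2)[OF t0] t by (intro mult_mono) auto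
    hence "\<bar>DS t * Mq t\<bar> \<le> 5 * M t" by (simp only: abs_mult)
    thus ?thesis using t by simp
  qed
  have e4: "\<bar>(1 + Sp t) * Mq t * E2 t / 2\<bar> \<le> 10 * M t"
  proof -
    have "\<bar>(1 + Sp t) * Mq t\<bar> \<le> 2 * M t" unfolding abs_mult using S MY_bd(2)[OF t0] t by (intro mult_mono) auto
    hence "\<bar>(1 + Sp t) * Mq t\<bar> * \<bar>E2 t\<bar> \<le> (2 * M t) * 10" using E2_bd[OF t0 _ M3] t by (intro mult_mono) auto
    hence "\<bar>(1 + Sp t) * Mq t * E2 t\<bar> \<le> 20 * M t" by (simp only: abs_mult[of "(1 + Sp t) * Mq t"])
    thus ?thesis by simp
  qed
  have e1': "3 * a * MY t \<ge> - 6 * M t" using e1 unfolding abs_le_iff by argo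
  have e2': "(2 + a) * MY t * E1 t / 4 \<ge> - 3 * M t" using e2 unfolding abs_le_iff by argo
  have e3': "DS t * Mq t / 2 \<ge> - 3 * M t" using e3 unfolding abs_le_iff by argo
  have e4': "(1 + Sp t) * Mq t * E2 t / 2 \<le> 10 * M t" using e4 unfolding abs_le_iff by argo
  show ?thesis unfolding D4_def using p1 p2 e1' e2' e3' e4' a t by argo
qed

lemma R1_over_M: assumes k: "k = 1 \<or> k = 2" shows "filterlim (\<lambda>t. R1 t / (M t)^k) at_top at_top"
proof -
  define a where "a = real k"
  have a: "1 \<le> a" "a \<le> 2" using k unfolding a_def by auto
  obtain T where T: "\<And>t. t \<ge> T \<Longrightarrow> t > \<tau>0 \<and> 0 < M t \<and> M t \<le> 1/88 \<and> \<bar>Sp t\<bar> \<le> 1/32"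
    using ev_small unfolding eventually_at_top_linorder by auto
  have "filterlim (\<lambda>t. L4 a t - 1) at_top at_top"
  proof (rule grow_to_infty[where T = T and DF = "D4 a" and k = "1/2"])
    fix x assume x: "x \<ge> T"
    have "(L4 a has_real_derivative D4 a x) (at x)" using dL4 T[OF x] by auto
    thus "((\<lambda>t. L4 a t - 1) has_real_derivative D4 a x) (at x)" by (auto intro!: derivative_eq_intros)
    show "D4 a x \<ge> 1/2" using D4_ge[OF a] T[OF x] by auto
  qed simp
  hence lim: "filterlim (\<lambda>t. exp (L4 a t - 1)) at_top at_top"
    by (rule filterlim_compose[OF exp_at_top])
  show ?thesis
  proof (rule filterlim_at_top_mono[OF lim])
    show "eventually (\<lambda>t. exp (L4 a t - 1) \<le> R1 t / (M t)^k) at_top"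
      using eventually_ge_at_top[of T]
    proof eventually_elim
      case (elim t)
      have tt: "t > \<tau>0" "0 < M t" "M t \<le> 1/88" using T[OF elim] by auto
      have t0: "t \<ge> \<tau>0" using tt by simp
      have Rp: "R1 t > 0" using R1pos[OF t0] .
      have b1: "\<bar>MY t\<bar> \<le> M t" using MY_bd(3)[OF t0] tt by simp
      have b2: "\<bar>BMQ t\<bar> \<le> 4 * M t"
      proof -
        have S: "-1 < Sp t" "Sp t < 1" using S_bd[OF t0] by auto
        have "\<bar>BMQ t\<bar> = 2 * (1 + Sp t) * \<bar>Mq t\<bar>" unfolding BMQ_def using S by (simp add: abs_mult)
        also have "\<dots> \<le> 4 * M t" by (rule mult_mono) (use S MY_bd(2)[OF t0] tt in auto)
        finally show ?thesis .
      qed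
      have b3: "\<bar>(2 + a) * MY t / 4\<bar> \<le> M t"
      proof -
        have "\<bar>(2 + a) * MY t\<bar> \<le> 4 * M t" unfolding abs_mult using a b1 by (intro mult_mono) auto
        thus ?thesis by simp
      qed
      have "L4 a t - 1 \<le> ln (R1 t) - a * ln (M t)"
        unfolding L4_def using b2 b3 tt by (simp only: abs_le_iff) argo
      hence "exp (L4 a t - 1) \<le> exp (ln (R1 t) - a * ln (M t))" by simp
      also have "exp (ln (R1 t) - a * ln (M t)) = R1 t / (M t)^k"
        unfolding a_def using Rp tt by (simp add: exp_diff exp_of_nat_mult)
      finally show ?case .
    qed
  qed
qed

end

lemma alg_DZs:
  fixes S M p q X Y DS Dal :: real
  assumes "M \<noteq> 0"
  shows "2 * (p + (- ((1+S)^3*M^2/8))) * ((-2*(1+S) + 2*(1+S)*p^2 - 4*q/M) + Dal)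
       + 2 * (q + (1+S)*M/2) * ((4*p/M + 2*(1+S)*p*q) + (DS*M + (1+S)*(-((1+S)^2 + X + 3*M*Y)*M))/2)
     = 2 * (p + (- ((1+S)^3*M^2/8))) * (2*(1+S)*p^2 + Dal)
       + 2 * (q + (1+S)*M/2) * (2*(1+S)*p*q + DS*M/2 - (1+S)*M*(X + 3*M*Y)/2)"
  using assms by (simp add: field_simps power2_eq_square power3_eq_cube)

lemma alg_zeta:
  fixes D Z M K :: real
  assumes "M \<noteq> 0"
  shows "(D * M^2 - Z * (2 * M * (- K * M))) / (M^2 * M^2) = D / M^2 + 2 * (Z / M^2) * K"
  using assms by (simp add: field_simps power2_eq_square)

context sys
begin

definition "al t = - ((1 + Sp t)^3 * (M t)^2 / 8)"
definition "pt t = p t + al t"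
definition "yy t = q t + (1 + Sp t) * M t / 2"
definition "Zs t = (pt t)^2 + (yy t)^2"
definition "zeta t = Zs t / (M t)^2"
definition "Dal t = - ((3 * (1 + Sp t)^2 * DS t * (M t)^2 + (1 + Sp t)^3 * (2 * M t * DM t)) / 8)"
definition "DZ t = 2 * pt t * (2*(1+Sp t)*(p t)^2 + Dal t)
   + 2 * yy t * (2*(1+Sp t)*p t*q t + DS t*M t/2 - (1+Sp t)*M t*(X t + 3*M t*Y t)/2)"
definition "Dzeta t = DZ t / (M t)^2 + 2 * zeta t * ((1 + Sp t)^2 + X t + 3 * M t * Y t)"

lemma dal: assumes "t > \<tau>0" shows "(al has_real_derivative Dal t) (at t)"
proof -
  have "((\<lambda>t. - ((1 + Sp t)^3 * (M t)^2 / 8)) has_real_derivative Dal t) (at t)"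
    unfolding Dal_def using dS'[OF assms] dM'[OF assms]
    by (auto intro!: derivative_eq_intros simp: field_simps power2_eq_square power3_eq_cube)
  moreover have "al = (\<lambda>t. - ((1 + Sp t)^3 * (M t)^2 / 8))" by (rule ext) (simp add: al_def)
  ultimately show ?thesis by simp
qed

lemma dZs: assumes "t > \<tau>0" shows "(Zs has_real_derivative DZ t) (at t)"
proof -
  have t0: "t \<ge> \<tau>0" using assms by simp
  have Mn: "M t \<noteq> 0" using Mnz[OF t0] .
  have dpt: "(pt has_real_derivative (-2*(1+Sp t) + 2*(1+Sp t)*(p t)^2 - 4 * q t / M t) + Dal t) (at t)"
  proof -
    have "((\<lambda>t. p t + al t) has_real_derivative (-2*(1+Sp t) + 2*(1+Sp t)*(p t)^2 - 4 * q t / M t) + Dal t) (at t)"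
      by (intro derivative_intros dp[OF assms] dal[OF assms])
    moreover have "pt = (\<lambda>t. p t + al t)" by (rule ext) (simp add: pt_def)
    ultimately show ?thesis by simp
  qed
  have dyy: "(yy has_real_derivative (4 * p t / M t + 2 * (1 + Sp t) * p t * q t) + (DS t * M t + (1 + Sp t) * DM t) / 2) (at t)"
  proof -
    have "((\<lambda>t. q t + (1 + Sp t) * M t / 2) has_real_derivative (4 * p t / M t + 2 * (1 + Sp t) * p t * q t) + (DS t * M t + (1 + Sp t) * DM t) / 2) (at t)"
      using dq[OF assms] dS'[OF assms] dM'[OF assms] by (auto intro!: derivative_eq_intros simp: field_simps)
    moreover have "yy = (\<lambda>t. q t + (1 + Sp t) * M t / 2)" by (rule ext) (simp add: yy_def)
    ultimately show ?thesis by simp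
  qed
  have "((\<lambda>t. (pt t)^2 + (yy t)^2) has_real_derivative
      2 * pt t * ((-2*(1+Sp t) + 2*(1+Sp t)*(p t)^2 - 4 * q t / M t) + Dal t)
    + 2 * yy t * ((4 * p t / M t + 2 * (1 + Sp t) * p t * q t) + (DS t * M t + (1 + Sp t) * DM t) / 2)) (at t)"
    using dpt dyy by (auto intro!: derivative_eq_intros)
  moreover have "2 * pt t * ((-2*(1+Sp t) + 2*(1+Sp t)*(p t)^2 - 4 * q t / M t) + Dal t)
    + 2 * yy t * ((4 * p t / M t + 2 * (1 + Sp t) * p t * q t) + (DS t * M t + (1 + Sp t) * DM t) / 2) = DZ t"
    unfolding DZ_def pt_def yy_def al_def DM_eq using alg_DZs[OF Mn, where S="Sp t" and p="p t" and q="q t" and X="X t" and Y="Y t" and DS="DS t" and Dal="Dal t"]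
    by simp
  moreover have "Zs = (\<lambda>t. (pt t)^2 + (yy t)^2)" by (rule ext) (simp add: Zs_def)
  ultimately show ?thesis by simp
qed

lemma dzeta: assumes "t > \<tau>0" shows "(zeta has_real_derivative Dzeta t) (at t)"
proof -
  have t0: "t \<ge> \<tau>0" using assms by simp
  have Mn: "M t \<noteq> 0" using Mnz[OF t0] .
  have "((\<lambda>t. Zs t / (M t)^2) has_real_derivative (DZ t * (M t)^2 - Zs t * (2 * M t * DM t)) / ((M t)^2 * (M t)^2)) (at t)"
    using dZs[OF assms] dM'[OF assms] Mn by (auto intro!: derivative_eq_intros simp: power2_eq_square)
  moreover have "(DZ t * (M t)^2 - Zs t * (2 * M t * DM t)) / ((M t)^2 * (M t)^2) = Dzeta t"
    unfolding Dzeta_def zeta_def DM_eq using alg_zeta[OF Mn, where D="DZ t" and Z="Zs t" and K="(1 + Sp t)^2 + X t + 3 * M t * Y t"]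
    by simp
  moreover have "zeta = (\<lambda>t. Zs t / (M t)^2)" by (rule ext) (simp add: zeta_def)
  ultimately show ?thesis by simp
qed

end

lemma abs_mm: fixes a b A B :: real assumes "\<bar>a\<bar> \<le> A" "\<bar>b\<bar> \<le> B" shows "\<bar>a * b\<bar> \<le> A * B"
proof -
  have "\<bar>a\<bar> * \<bar>b\<bar> \<le> A * B" using assms by (intro mult_mono) auto
  thus ?thesis by (simp add: abs_mult)
qed

context sys
begin

lemma band_bound:
  assumes t: "t > \<tau>0" and M0: "0 < M t" "M t \<le> 1/3" and S: "\<bar>Sp t\<bar> \<le> 1/4" and Z: "Zs t \<le> 4 * (M t)^2"
  shows "\<bar>DZ t\<bar> \<le> (M t)^2 * (400 * M t + 2 * \<bar>DS t\<bar> + 4 * \<bar>X t\<bar>)"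
proof -
  define m where "m = M t"
  have t0: "t \<ge> \<tau>0" using t by simp
  have m0: "0 < m" "m \<le> 1/3" using M0 unfolding m_def by auto
  have s1: "3/4 \<le> 1 + Sp t" "1 + Sp t \<le> 5/4" using S by (auto simp: abs_le_iff)
  have c2: "(1 + Sp t)^2 \<le> 2"
  proof -
    have "(1 + Sp t)^2 \<le> (5/4)^2" using s1 by (intro power_mono) auto
    also have "(5/4::real)^2 \<le> 2" by (simp add: power2_eq_square)
    finally show ?thesis .
  qed
  have c3: "(1 + Sp t)^3 \<le> 2"
  proof -
    have "(1 + Sp t)^3 \<le> (5/4)^3" using s1 by (intro power_mono) auto
    also have "(5/4::real)^3 \<le> 2" by (simp add: power3_eq_cube)
    finally show ?thesis .
  qed
  have c3': "(1 + Sp t)^3 \<ge> 0" using s1 by simp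
  have pt_b: "\<bar>pt t\<bar> \<le> 2 * m"
  proof -
    have "(pt t)^2 \<le> (2 * m)^2" using Z unfolding Zs_def m_def by (simp add: power_mult_distrib, (smt (verit) zero_le_power2)?)
    hence "\<bar>pt t\<bar> \<le> \<bar>2 * m\<bar>" by (simp only: abs_le_square_iff)
    thus ?thesis using m0 by simp
  qed
  have yy_b: "\<bar>yy t\<bar> \<le> 2 * m"
  proof -
    have "(yy t)^2 \<le> (2 * m)^2" using Z unfolding Zs_def m_def by (simp add: power_mult_distrib, (smt (verit) zero_le_power2)?)
    hence "\<bar>yy t\<bar> \<le> \<bar>2 * m\<bar>" by (simp only: abs_le_square_iff)
    thus ?thesis using m0 by simp
  qed
  have al_b: "\<bar>al t\<bar> \<le> m^2 / 4"
  proof -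
    have "\<bar>al t\<bar> = (1 + Sp t)^3 * m^2 / 8" unfolding al_def m_def using c3' by (simp add: abs_mult)
    also have "\<dots> \<le> 2 * m^2 / 8" using c3 by (intro divide_right_mono mult_right_mono) auto
    finally show ?thesis by simp
  qed
  have p_b: "\<bar>p t\<bar> \<le> 3 * m"
  proof -
    have "p t = pt t - al t" unfolding pt_def by simp
    moreover have "m^2 / 4 \<le> m" using m0 by (simp add: power2_eq_square, (smt (verit) mult_right_le_one_le)?)
    ultimately show ?thesis using pt_b al_b by (simp add: abs_le_iff, argo?)
  qed
  have q_b: "\<bar>q t\<bar> \<le> 3 * m"
  proof -
    have "q t = yy t - (1 + Sp t) * m / 2" unfolding yy_def m_def by simp
    moreover have "(1 + Sp t) * m / 2 \<le> m" using s1 m0 by simp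
    moreover have "(1 + Sp t) * m / 2 \<ge> 0" using s1 m0 by simp
    ultimately show ?thesis using yy_b by (simp add: abs_le_iff, argo?)
  qed
  have XY1: "\<bar>X t\<bar> \<le> 1" "\<bar>Y t\<bar> \<le> 1" using XY_bd[OF t0] R1_lt(2)[OF t0] by auto
  have DSb: "\<bar>DS t\<bar> \<le> 5" using DS_bd[OF t0] by (smt (verit) zero_le_power2)
  have K_b: "\<bar>(1 + Sp t)^2 + X t + 3 * M t * Y t\<bar> \<le> 4"
  proof -
    have "\<bar>3 * M t * Y t\<bar> \<le> 1 * 1" using abs_mm[of "3 * M t" 1 "Y t" 1] XY1 M0 by simp
    thus ?thesis using c2 XY1 zero_le_power2[of "1 + Sp t"] by (simp add: abs_le_iff, argo?)
  qed
  have DM_b: "\<bar>DM t\<bar> \<le> 4 * m"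
  proof -
    have "\<bar>DM t\<bar> = \<bar>((1 + Sp t)^2 + X t + 3 * M t * Y t) * M t\<bar>"
      unfolding DM_eq by (simp only: minus_mult_left abs_minus_cancel)
    thus ?thesis unfolding m_def using abs_mm[OF K_b, of "M t" "M t"] M0 by simp
  qed
  have m2: "m^2 \<ge> 0" "m * \<bar>X t\<bar> \<ge> 0" "m * \<bar>DS t\<bar> \<ge> 0" using m0 by auto
  have Dal_b: "\<bar>Dal t\<bar> \<le> 6 * m^2"
  proof -
    have a: "\<bar>3 * (1 + Sp t)^2 * DS t * (M t)^2\<bar> \<le> 30 * m^2"
    proof -
      have "\<bar>3 * (1 + Sp t)^2\<bar> \<le> 6" using c2 by simp
      hence "\<bar>3 * (1 + Sp t)^2 * DS t\<bar> \<le> 6 * 5" using abs_mm DSb by blast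
      moreover have "\<bar>(M t)^2\<bar> \<le> m^2" unfolding m_def by simp
      ultimately have "\<bar>3 * (1 + Sp t)^2 * DS t * (M t)^2\<bar> \<le> (6 * 5) * m^2" using abs_mm by blast
      thus ?thesis by simp
    qed
    have b: "\<bar>(1 + Sp t)^3 * (2 * M t * DM t)\<bar> \<le> 16 * m^2"
    proof -
      have "\<bar>2 * M t * DM t\<bar> \<le> (2 * m) * (4 * m)" using abs_mm[of "2 * M t" "2 * m" "DM t" "4 * m"] DM_b M0 m_def by simp
      moreover have "\<bar>(1 + Sp t)^3\<bar> \<le> 2" using c3 c3' by simp
      ultimately have "\<bar>(1 + Sp t)^3 * (2 * M t * DM t)\<bar> \<le> 2 * ((2 * m) * (4 * m))" using abs_mm by blast
      thus ?thesis by (simp add: power2_eq_square)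
    qed
    have e: "\<bar>Dal t\<bar> = \<bar>3 * (1 + Sp t)^2 * DS t * (M t)^2 + (1 + Sp t)^3 * (2 * M t * DM t)\<bar> / 8"
      unfolding Dal_def by simp
    have "\<bar>3 * (1 + Sp t)^2 * DS t * (M t)^2 + (1 + Sp t)^3 * (2 * M t * DM t)\<bar>
       \<le> \<bar>3 * (1 + Sp t)^2 * DS t * (M t)^2\<bar> + \<bar>(1 + Sp t)^3 * (2 * M t * DM t)\<bar>" by (rule abs_triangle_ineq)
    thus ?thesis unfolding e using a b m2 by argo
  qed
  have psq: "\<bar>(p t)^2\<bar> \<le> 9 * m^2"
  proof -
    have "\<bar>(p t)^2\<bar> = \<bar>p t\<bar>^2" by simp
    also have "\<dots> \<le> (3 * m)^2" using p_b by (intro power_mono) auto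
    also have "\<dots> = 9 * m^2" by (simp add: power_mult_distrib)
    finally show ?thesis .
  qed
  have b1: "\<bar>2*(1+Sp t)\<bar> \<le> 5/2" using s1 by simp
  have A1: "\<bar>2*(1+Sp t)*(p t)^2 + Dal t\<bar> \<le> 29 * m^2"
  proof -
    have "\<bar>2*(1+Sp t)*(p t)^2\<bar> \<le> 5/2 * (9 * m^2)" using b1 psq by (rule abs_mm)
    moreover have "\<bar>2*(1+Sp t)*(p t)^2 + Dal t\<bar> \<le> \<bar>2*(1+Sp t)*(p t)^2\<bar> + \<bar>Dal t\<bar>" by (rule abs_triangle_ineq)
    ultimately show ?thesis using Dal_b m2 by argo
  qed
  have A2: "\<bar>2*(1+Sp t)*p t*q t + DS t*M t/2 - (1+Sp t)*M t*(X t + 3*M t*Y t)/2\<bar> \<le> 25 * m^2 + m * \<bar>DS t\<bar> / 2 + m * \<bar>X t\<bar>"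
  proof -
    have "\<bar>2*(1+Sp t)*p t\<bar> \<le> 5/2 * (3 * m)" using b1 p_b by (rule abs_mm)
    hence "\<bar>2*(1+Sp t)*p t*q t\<bar> \<le> (5/2 * (3 * m)) * (3 * m)" using q_b by (rule abs_mm)
    moreover have "(5/2 * (3 * m)) * (3 * m) = 45/2 * m^2" by (simp add: power2_eq_square)
    ultimately have a: "\<bar>2*(1+Sp t)*p t*q t\<bar> \<le> 45/2 * m^2" by simp
    have b: "\<bar>DS t*M t/2\<bar> = m * \<bar>DS t\<bar> / 2" unfolding m_def using M0 by (simp add: abs_mult)
    have c: "\<bar>(1+Sp t)*M t*(X t + 3*M t*Y t)/2\<bar> \<le> m * \<bar>X t\<bar> + 2 * m^2"
    proof -
      have "\<bar>3*M t*Y t\<bar> \<le> (3 * m) * 1" using abs_mm[of "3 * M t" "3 * m" "Y t" 1] XY1 M0 m_def by simp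
      moreover have "\<bar>X t + 3*M t*Y t\<bar> \<le> \<bar>X t\<bar> + \<bar>3*M t*Y t\<bar>" by (rule abs_triangle_ineq)
      ultimately have "\<bar>X t + 3*M t*Y t\<bar> \<le> \<bar>X t\<bar> + 3 * m" by argo
      moreover have "\<bar>(1+Sp t)*M t\<bar> \<le> 5/4 * m" using abs_mm[of "1 + Sp t" "5/4" "M t" m] s1 M0 m_def by simp
      ultimately have "\<bar>(1+Sp t)*M t*(X t + 3*M t*Y t)\<bar> \<le> (5/4 * m) * (\<bar>X t\<bar> + 3 * m)"
        using abs_mm by blast
      moreover have "(5/4 * m) * (\<bar>X t\<bar> + 3 * m) = 5/4 * (m * \<bar>X t\<bar>) + 15/4 * m^2"
        by (simp add: algebra_simps power2_eq_square)
      moreover have "\<bar>(1+Sp t)*M t*(X t + 3*M t*Y t)/2\<bar> = \<bar>(1+Sp t)*M t*(X t + 3*M t*Y t)\<bar> / 2" by simp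
      ultimately show ?thesis using m2 by argo
    qed
    have "\<bar>2*(1+Sp t)*p t*q t + DS t*M t/2 - (1+Sp t)*M t*(X t + 3*M t*Y t)/2\<bar>
       \<le> \<bar>2*(1+Sp t)*p t*q t\<bar> + \<bar>DS t*M t/2\<bar> + \<bar>(1+Sp t)*M t*(X t + 3*M t*Y t)/2\<bar>"
      by (rule order_trans[OF abs_triangle_ineq4]) (simp add: abs_triangle_ineq)
    thus ?thesis using a b c m2 by argo
  qed
  have "\<bar>2 * pt t * (2*(1+Sp t)*(p t)^2 + Dal t)\<bar> \<le> (2 * (2 * m)) * (29 * m^2)"
    using abs_mm[OF abs_mm[of 2 2 "pt t" "2 * m"] A1] pt_b by simp
  moreover have "\<bar>2 * yy t * (2*(1+Sp t)*p t*q t + DS t*M t/2 - (1+Sp t)*M t*(X t + 3*M t*Y t)/2)\<bar>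
      \<le> (2 * (2 * m)) * (25 * m^2 + m * \<bar>DS t\<bar> / 2 + m * \<bar>X t\<bar>)"
    using abs_mm[OF abs_mm[of 2 2 "yy t" "2 * m"] A2] yy_b by simp
  moreover have "\<bar>DZ t\<bar> \<le> \<bar>2 * pt t * (2*(1+Sp t)*(p t)^2 + Dal t)\<bar>
     + \<bar>2 * yy t * (2*(1+Sp t)*p t*q t + DS t*M t/2 - (1+Sp t)*M t*(X t + 3*M t*Y t)/2)\<bar>"
    unfolding DZ_def by (rule abs_triangle_ineq)
  ultimately have "\<bar>DZ t\<bar> \<le> (2 * (2 * m)) * (29 * m^2) + (2 * (2 * m)) * (25 * m^2 + m * \<bar>DS t\<bar> / 2 + m * \<bar>X t\<bar>)"
    by argo
  also have "\<dots> = m^2 * (216 * m + 2 * \<bar>DS t\<bar> + 4 * \<bar>X t\<bar>)" by (simp add: algebra_simps power2_eq_square power3_eq_cube)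
  also have "\<dots> \<le> m^2 * (400 * m + 2 * \<bar>DS t\<bar> + 4 * \<bar>X t\<bar>)" using m0 by (intro mult_left_mono) auto
  finally show ?thesis unfolding m_def .
qed

end

lemma tri4: fixes a b c d :: real assumes "b \<ge> 0" shows "\<bar>- a - b + c - d\<bar> \<le> \<bar>a\<bar> + b + \<bar>c\<bar> + \<bar>d\<bar>"
  using assms by argo

context sys
begin

lemma DS_small: assumes t: "t \<ge> \<tau>0" shows "\<bar>DS t\<bar> \<le> \<bar>Sp t\<bar> + 3 * R1 t + 4 * (v t)^2"
proof -
  have S: "-1 < Sp t" "Sp t < 1" "(Sp t)^2 < 1" using S_bd[OF t] by auto
  have vv: "0 < 3 + (v t)^2" using v_bd[OF t] by simp
  have Op: "0 < Om t" using Om_pos[OF t] .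
  have Op2: "Om t \<le> 1" using R1pos[OF t] zero_le_power2[of "Sp t"] unfolding Om_def by argo
  have e: "DS t = - ((1 - (Sp t)^2) * Sp t) - R1 t + (1 + Sp t) * X t - 4 * Om t * (v t)^2 / (3 + (v t)^2)"
    unfolding DS_def Om_def Omg_def X_def by (simp add: algebra_simps)
  have a: "\<bar>(1 - (Sp t)^2) * Sp t\<bar> \<le> 1 * \<bar>Sp t\<bar>" using abs_mm[of "1 - (Sp t)^2" 1 "Sp t" "\<bar>Sp t\<bar>"] S by simp
  have b: "\<bar>(1 + Sp t) * X t\<bar> \<le> 2 * R1 t" using abs_mm[of "1 + Sp t" 2 "X t" "R1 t"] S XY_bd(3)[OF t] by simp
  have c: "\<bar>4 * Om t * (v t)^2 / (3 + (v t)^2)\<bar> \<le> 4 * (v t)^2"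
  proof -
    have "Om t \<le> 3 + (v t)^2" using Op2 zero_le_power2[of "v t"] by argo
    hence h1: "Om t * (v t)^2 \<le> (3 + (v t)^2) * (v t)^2" by (rule mult_right_mono) simp
    have "4 * Om t * (v t)^2 / (3 + (v t)^2) \<le> 4 * (v t)^2" using h1 vv by (simp add: divide_le_eq algebra_simps)
    moreover have "4 * Om t * (v t)^2 / (3 + (v t)^2) \<ge> 0" using Op vv by simp
    ultimately show ?thesis by simp
  qed
  have R: "R1 t \<ge> 0" using R1pos[OF t] by simp
  have tri: "\<bar>DS t\<bar> \<le> \<bar>(1 - (Sp t)^2) * Sp t\<bar> + R1 t + \<bar>(1 + Sp t) * X t\<bar> + \<bar>4 * Om t * (v t)^2 / (3 + (v t)^2)\<bar>"
    unfolding e by (rule tri4[OF R])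
  show ?thesis using tri a b c by argo
qed

lemma DS_to_0: "(DS \<longlongrightarrow> 0) at_top"
proof (rule Lim_null_comparison)
  show "eventually (\<lambda>t. norm (DS t) \<le> \<bar>Sp t\<bar> + 3 * R1 t + 4 * (v t)^2) at_top"
    using eventually_ge_at_top[of \<tau>0] by eventually_elim (use DS_small in auto)
  have "((\<lambda>t. \<bar>Sp t\<bar> + 3 * R1 t + 4 * (v t)^2) \<longlongrightarrow> \<bar>0\<bar> + 3 * 0 + 4 * 0^2) at_top"
    using S_to_0 R1_to_0 v_to_0 by (intro tendsto_intros)
  thus "((\<lambda>t. \<bar>Sp t\<bar> + 3 * R1 t + 4 * (v t)^2) \<longlongrightarrow> 0) at_top" by simp
qed

lemma X_to_0: "(X \<longlongrightarrow> 0) at_top"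
proof (rule Lim_null_comparison[OF _ R1_to_0])
  show "eventually (\<lambda>t. norm (X t) \<le> R1 t) at_top"
    using eventually_ge_at_top[of \<tau>0] by eventually_elim (use XY_bd in auto)
qed

definition "eta t = 400 * M t + 2 * \<bar>DS t\<bar> + 4 * \<bar>X t\<bar>"

lemma eta_to_0: "(eta \<longlongrightarrow> 0) at_top"
proof -
  have "((\<lambda>t. 400 * M t + 2 * \<bar>DS t\<bar> + 4 * \<bar>X t\<bar>) \<longlongrightarrow> 400 * 0 + 2 * \<bar>0\<bar> + 4 * \<bar>0\<bar>) at_top"
    using M_tendsto DS_to_0 X_to_0 by (intro tendsto_intros)
  thus ?thesis unfolding eta_def[abs_def] by simp
qed

lemma ev5: "eventually (\<lambda>t. t > \<tau>0 \<and> 0 < M t \<and> M t \<le> 1/400 \<and> \<bar>Sp t\<bar> \<le> 1/4 \<and> eta t \<le> 1/32) at_top"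
proof -
  have "eventually (\<lambda>t. dist (Sp t) 0 < 1/4) at_top" using S_to_0 by (rule tendstoD) simp
  moreover have "eventually (\<lambda>t. dist (eta t) 0 < 1/32) at_top" using eta_to_0 by (rule tendstoD) simp
  moreover have "eventually (\<lambda>t. t > \<tau>0 \<and> 0 < M t \<and> M t \<le> 1/400) at_top" by (rule ev_M_small) simp
  ultimately show ?thesis by eventually_elim (auto simp: dist_real_def)
qed

lemma zeta_band:
  assumes t: "t > \<tau>0" "0 < M t" "M t \<le> 1/400" "\<bar>Sp t\<bar> \<le> 1/4" "eta t \<le> 1/32"
    and z: "1/16 \<le> zeta t" "zeta t \<le> 4"
  shows "Dzeta t \<ge> 1/32"
proof -
  have t0: "t \<ge> \<tau>0" using t by simp
  have M2: "(M t)^2 > 0" using t by simp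
  have Zs_eq: "Zs t = zeta t * (M t)^2" unfolding zeta_def using M2 by simp
  have Zb: "Zs t \<le> 4 * (M t)^2" unfolding Zs_eq using z M2 by (intro mult_right_mono) auto
  have bb: "\<bar>DZ t\<bar> \<le> (M t)^2 * (400 * M t + 2 * \<bar>DS t\<bar> + 4 * \<bar>X t\<bar>)"
    by (rule band_bound) (use t Zb in auto)
  hence "\<bar>DZ t / (M t)^2\<bar> \<le> eta t" unfolding eta_def using M2 by (simp add: abs_divide divide_le_eq mult.commute)
  moreover have "- (DZ t / (M t)^2) \<le> \<bar>DZ t / (M t)^2\<bar>" by (rule abs_ge_minus_self)
  ultimately have d1: "DZ t / (M t)^2 \<ge> - 1/32" using t by argo
  have K: "(1 + Sp t)^2 + X t + 3 * M t * Y t \<ge> 1/2"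
  proof -
    have "(1 + Sp t)^2 \<ge> (3/4)^2" using t by (intro power_mono) (auto simp: abs_le_iff)
    hence k1: "(1 + Sp t)^2 \<ge> 9/16" by (simp add: power2_eq_square)
    have "4 * \<bar>X t\<bar> \<le> 1/32" using t unfolding eta_def by (smt (verit) abs_ge_zero)
    hence k2: "X t \<ge> - 1/128" by (simp add: abs_le_iff)
    have "\<bar>3 * M t * Y t\<bar> \<le> (3 * M t) * 1" using abs_mm[of "3 * M t" "3 * M t" "Y t" 1] XY_bd(4)[OF t0] R1_lt(2)[OF t0] t by simp
    hence k3: "3 * M t * Y t \<ge> - 3 / 400" using t by (simp add: abs_le_iff)
    show ?thesis using k1 k2 k3 by argo
  qed
  have "2 * zeta t * ((1 + Sp t)^2 + X t + 3 * M t * Y t) \<ge> 2 * (1/16) * (1/2)"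
    using z K by (intro mult_mono) auto
  thus ?thesis unfolding Dzeta_def using d1 by argo
qed

lemma R2_lower:
  assumes t: "t > \<tau>0" "0 < M t" "M t \<le> 1/400" "\<bar>Sp t\<bar> \<le> 1/4"
    and z: "zeta t < 1/16 \<or> zeta t \<ge> 4"
  shows "R2 t \<ge> R1 t * M t / 8"
proof -
  define m where "m = M t"
  have t0: "t \<ge> \<tau>0" using t by simp
  have m0: "0 < m" "m \<le> 1/400" using t unfolding m_def by auto
  have M2: "m^2 > 0" using m0 by simp
  have Rp: "R1 t > 0" using R1pos[OF t0] .
  have s1: "3/4 \<le> 1 + Sp t" "1 + Sp t \<le> 5/4" using t by (auto simp: abs_le_iff)
  have Zs_eq: "Zs t = zeta t * m^2" unfolding zeta_def m_def using M2 m_def by simp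
  have pR: "R2 t \<ge> R1 t * \<bar>p t\<bar>" "R2 t \<ge> R1 t * \<bar>q t\<bar>"
    using XY_bd(1,2)[OF t0] Rp unfolding p_def q_def by (simp_all add: abs_divide)
  have al_b: "\<bar>al t\<bar> \<le> m / 4"
  proof -
    have "(1 + Sp t)^3 \<le> (5/4)^3" using s1 by (intro power_mono) auto
    also have "(5/4::real)^3 \<le> 2" by (simp add: power3_eq_cube)
    finally have c3: "(1 + Sp t)^3 \<le> 2" .
    have c3': "(1 + Sp t)^3 \<ge> 0" using s1 by simp
    have "\<bar>al t\<bar> = (1 + Sp t)^3 * m^2 / 8" unfolding al_def m_def using c3' by (simp add: abs_mult)
    also have "\<dots> \<le> 2 * m^2 / 8" using c3 by (intro divide_right_mono mult_right_mono) auto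
    also have "\<dots> \<le> m / 4" using m0 by (simp add: power2_eq_square, (smt (verit) mult_right_le_one_le)?)
    finally show ?thesis .
  qed
  have qe: "q t = yy t - (1 + Sp t) * m / 2" unfolding yy_def m_def by simp
  have pe: "p t = pt t - al t" unfolding pt_def by simp
  have "\<bar>p t\<bar> \<ge> m / 8 \<or> \<bar>q t\<bar> \<ge> m / 8"
  proof (cases "zeta t < 1/16")
    case True
    have "(yy t)^2 \<le> Zs t" unfolding Zs_def by simp
    also have "Zs t < m^2 / 16" unfolding Zs_eq using True M2 by simp
    also have "m^2 / 16 = (m / 4)^2" by (simp add: power_divide)
    finally have "(yy t)^2 < (m / 4)^2" .
    hence hy: "\<bar>yy t\<bar>^2 < (m / 4)^2" by simp
    have y4: "\<bar>yy t\<bar> < m / 4" by (rule power2_less_imp_less[OF hy]) (use m0 in simp)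
    have "(1 + Sp t) * m / 2 \<ge> 3/8 * m" using s1 m0 by simp
    hence "\<bar>q t\<bar> \<ge> m / 8" unfolding qe using y4 by argo
    thus ?thesis by simp
  next
    case False
    hence z4: "zeta t \<ge> 4" using z by simp
    have Zb: "Zs t \<ge> 4 * m^2" unfolding Zs_eq using z4 M2 by (intro mult_right_mono) auto
    have "\<bar>pt t\<bar> \<ge> m \<or> \<bar>yy t\<bar> \<ge> m"
    proof (rule ccontr)
      assume "\<not> (\<bar>pt t\<bar> \<ge> m \<or> \<bar>yy t\<bar> \<ge> m)"
      hence a: "\<bar>pt t\<bar> < m" "\<bar>yy t\<bar> < m" by auto
      have "\<bar>pt t\<bar>^2 < m^2" using a(1) by (intro power_strict_mono) auto
      moreover have "\<bar>yy t\<bar>^2 < m^2" using a(2) by (intro power_strict_mono) auto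
      ultimately have "Zs t < 2 * m^2" unfolding Zs_def by simp
      thus False using Zb M2 by argo
    qed
    thus ?thesis
    proof
      assume h: "\<bar>pt t\<bar> \<ge> m"
      have "\<bar>p t\<bar> \<ge> m / 8" unfolding pe using h al_b m0 by argo
      thus ?thesis by simp
    next
      assume h: "\<bar>yy t\<bar> \<ge> m"
      have "(1 + Sp t) * m / 2 \<le> 5/8 * m" using s1 m0 by simp
      moreover have "(1 + Sp t) * m / 2 \<ge> 0" using s1 m0 by simp
      ultimately have "\<bar>q t\<bar> \<ge> m / 8" unfolding qe using h by argo
      thus ?thesis by simp
    qed
  qed
  thus ?thesis
  proof
    assume "\<bar>p t\<bar> \<ge> m / 8"
    hence "R1 t * \<bar>p t\<bar> \<ge> R1 t * (m / 8)" using Rp by (intro mult_left_mono) auto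
    thus ?thesis using pR unfolding m_def by simp
  next
    assume "\<bar>q t\<bar> \<ge> m / 8"
    hence "R1 t * \<bar>q t\<bar> \<ge> R1 t * (m / 8)" using Rp by (intro mult_left_mono) auto
    thus ?thesis using pR unfolding m_def by simp
  qed
qed

lemma zeta_dichotomy: "\<exists>T6. \<forall>t\<ge>T6. t > \<tau>0 \<and> 0 < M t \<and> M t \<le> 1/400 \<and> \<bar>Sp t\<bar> \<le> 1/4 \<and> (zeta t < 1/16 \<or> zeta t \<ge> 4)"
proof -
  obtain T5 where T5: "\<And>t. t \<ge> T5 \<Longrightarrow> t > \<tau>0 \<and> 0 < M t \<and> M t \<le> 1/400 \<and> \<bar>Sp t\<bar> \<le> 1/4 \<and> eta t \<le> 1/32"
    using ev5 unfolding eventually_at_top_linorder by auto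
  have der: "\<And>t. t \<ge> T5 \<Longrightarrow> (zeta has_real_derivative Dzeta t) (at t)" using dzeta T5 by auto
  have band: "\<And>t. t \<ge> T5 \<Longrightarrow> 1/16 \<le> zeta t \<Longrightarrow> zeta t \<le> 4 \<Longrightarrow> Dzeta t \<ge> 1/32"
    using zeta_band T5 by auto
  show ?thesis
  proof (cases "\<exists>t1\<ge>T5. zeta t1 \<ge> 1/16")
    case False
    have "zeta t < 1/16" if "t \<ge> T5" for t using False that by force
    thus ?thesis using T5 by (intro exI[of _ T5]) auto
  next
    case True
    then obtain t1 where t1: "t1 \<ge> T5" "zeta t1 \<ge> 1/16" by auto
    have low: "zeta t \<ge> 1/16" if "t \<ge> t1" for t
    proof (rule no_down_cross[where f = zeta and f' = Dzeta and ts = t1 and a = "1/16"])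
      fix x assume "x \<ge> t1"
      thus "(zeta has_real_derivative Dzeta x) (at x)" using der t1 by auto
    next
      fix x assume "x \<ge> t1" "zeta x = 1/16"
      thus "Dzeta x > 0" using band[of x] t1 by auto
    qed (use t1 that in auto)
    have "\<exists>t2\<ge>t1. zeta t2 \<ge> 4"
    proof (rule ccontr)
      assume "\<not> (\<exists>t2\<ge>t1. zeta t2 \<ge> 4)"
      hence up: "\<And>t. t \<ge> t1 \<Longrightarrow> zeta t < 4" by auto
      have "zeta (t1 + 200) \<ge> zeta t1 + (1/32) * ((t1 + 200) - t1)"
      proof (rule deriv_lower_lin[where Df = Dzeta])
        fix y assume y: "t1 \<le> y" "y \<le> t1 + 200"
        show "(zeta has_real_derivative Dzeta y) (at y)" using der y t1 by auto
        show "Dzeta y \<ge> 1/32" using band[of y] y t1 low[of y] up[of y] by auto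
      qed simp
      moreover have "zeta (t1 + 200) < 4" using up by simp
      ultimately show False using t1 by simp
    qed
    then obtain t2 where t2: "t2 \<ge> t1" "zeta t2 \<ge> 4" by auto
    have high: "zeta t \<ge> 4" if "t \<ge> t2" for t
    proof (rule no_down_cross[where f = zeta and f' = Dzeta and ts = t2 and a = 4])
      fix x assume "x \<ge> t2"
      thus "(zeta has_real_derivative Dzeta x) (at x)" using der t1 t2 by auto
    next
      fix x assume "x \<ge> t2" "zeta x = 4"
      thus "Dzeta x > 0" using band[of x] t1 t2 by auto
    qed (use t2 that in auto)
    show ?thesis using high T5 t1 t2 by (intro exI[of _ t2]) force
  qed
qed

lemma R2_over_M2: "filterlim (\<lambda>t. R2 t / (M t)^2) at_top at_top"
proof -
  obtain T6 where T6: "\<And>t. t \<ge> T6 \<Longrightarrow> t > \<tau>0 \<and> 0 < M t \<and> M t \<le> 1/400 \<and> \<bar>Sp t\<bar> \<le> 1/4 \<and> (zeta t < 1/16 \<or> zeta t \<ge> 4)"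
    using zeta_dichotomy by auto
  have "filterlim (\<lambda>t. R1 t / (M t)^1) at_top at_top" by (rule R1_over_M) simp
  hence "filterlim (\<lambda>t. R1 t / M t) at_top at_top" by simp
  hence lim: "filterlim (\<lambda>t. (1/8) * (R1 t / M t)) at_top at_top"
    by (intro filterlim_tendsto_pos_mult_at_top[OF tendsto_const]) auto
  show ?thesis
  proof (rule filterlim_at_top_mono[OF lim])
    show "eventually (\<lambda>t. (1/8) * (R1 t / M t) \<le> R2 t / (M t)^2) at_top"
      using eventually_ge_at_top[of T6]
    proof eventually_elim
      case (elim t)
      have h: "t > \<tau>0" "0 < M t" "M t \<le> 1/400" "\<bar>Sp t\<bar> \<le> 1/4" "zeta t < 1/16 \<or> zeta t \<ge> 4"
        using T6[OF elim] by auto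
      have r: "R2 t \<ge> R1 t * M t / 8" by (rule R2_lower) (use h in auto)
      have "(1/8) * (R1 t / M t) = (R1 t * M t / 8) / (M t)^2" using h by (simp add: power2_eq_square)
      also have "\<dots> \<le> R2 t / (M t)^2" using r h by (intro divide_right_mono) auto
      finally show ?case .
    qed
  qed
qed

lemma main: "(Sp \<longlongrightarrow> 0) at_top \<and> (R1 \<longlongrightarrow> 0) at_top \<and> (R2 \<longlongrightarrow> 0) at_top
         \<and> (v \<longlongrightarrow> 0) at_top \<and> (M \<longlongrightarrow> 0) at_top
         \<and> filterlim (\<lambda>t. R1 t / (M t)^2) at_top at_top
         \<and> filterlim (\<lambda>t. R2 t / (M t)^2) at_top at_top"
  using S_to_0 R1_to_0 R2_to_0 v_to_0 M_tendsto R1_over_M[of 2] R2_over_M2 by simp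

end

theorem theorem1:
  fixes Sp R1 R2 M psi v :: "real \<Rightarrow> real" and \<tau>0 :: real
  assumes dSp: "\<And>t. t \<ge> \<tau>0 \<Longrightarrow> (Sp has_real_derivative
      (-(1 - (Sp t)^2) * Sp t - R1 t + (1 + Sp t) * R2 t * cos (2 * psi t)
       - 4 * Omg (Sp t) (R1 t) * (v t)^2 / (3 + (v t)^2))) (at t within {\<tau>0..})"
    and dR1: "\<And>t. t \<ge> \<tau>0 \<Longrightarrow> (R1 has_real_derivative
      (2 * ((1 + Sp t) * Sp t + R2 t * cos (2 * psi t)) * R1 t
       - 2 * (1 + Sp t) * cos (2 * psi t) * R2 t)) (at t within {\<tau>0..})"
    and dR2: "\<And>t. t \<ge> \<tau>0 \<Longrightarrow> (R2 has_real_derivative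
      (2 * ((1 + Sp t) * Sp t + R2 t * cos (2 * psi t)) * R2 t
       - 2 * (1 + Sp t) * cos (2 * psi t) * R1 t)) (at t within {\<tau>0..})"
    and dM: "\<And>t. t \<ge> \<tau>0 \<Longrightarrow> (M has_real_derivative
      (-((1 + Sp t)^2 + R2 t * cos (2 * psi t) + 3 * R2 t * M t * sin (2 * psi t)) * M t))
      (at t within {\<tau>0..})"
    and dpsi: "\<And>t. t \<ge> \<tau>0 \<Longrightarrow> (psi has_real_derivative
      (2 / M t + (1 + Sp t) * (R1 t / R2 t) * sin (2 * psi t))) (at t within {\<tau>0..})"
    and dv: "\<And>t. t \<ge> \<tau>0 \<Longrightarrow> (v has_real_derivative
      (6 / (3 - (v t)^2) * Sp t * (1 - (v t)^2) * v t)) (at t within {\<tau>0..})"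
    and constr: "\<And>t. t \<ge> \<tau>0 \<Longrightarrow>
      (R1 t)^2 - (R2 t)^2 - (4 * Omg (Sp t) (R1 t) * v t / (3 + (v t)^2))^2 = 0"
    and vbd: "\<And>t. t \<ge> \<tau>0 \<Longrightarrow> -1 < v t \<and> v t < 1"
    and Opos: "\<And>t. t \<ge> \<tau>0 \<Longrightarrow> Omg (Sp t) (R1 t) > 0"
    and R1pos: "\<And>t. t \<ge> \<tau>0 \<Longrightarrow> R1 t > 0"
    and R2pos: "\<And>t. t \<ge> \<tau>0 \<Longrightarrow> R2 t > 0"
    and Mnz: "\<And>t. t \<ge> \<tau>0 \<Longrightarrow> M t \<noteq> 0"
    and Mlim: "filterlim M (at_right 0) at_top"
  shows "(Sp \<longlongrightarrow> 0) at_top \<and> (R1 \<longlongrightarrow> 0) at_top \<and> (R2 \<longlongrightarrow> 0) at_top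
         \<and> (v \<longlongrightarrow> 0) at_top \<and> (M \<longlongrightarrow> 0) at_top
         \<and> filterlim (\<lambda>t. R1 t / (M t)^2) at_top at_top
         \<and> filterlim (\<lambda>t. R2 t / (M t)^2) at_top at_top"
proof -
  have L: "sys Sp R1 R2 M psi v \<tau>0"
    by (rule sys.intro[OF dSp dR1 dR2 dM dpsi dv constr vbd Opos R1pos R2pos Mnz Mlim])
  show ?thesis by (rule sys.main[OF L])
qed

end
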